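(* Let $|\psi\rangle_{AB}$ and $|\varphi\rangle_{AB}$ be pure states on finite-dimensional registers $A,B$, let $\rho_A=\mathrm{Tr}_B|\psi\rangle\langle\psi|$ and $\sigma_A=\mathrm{Tr}_B|\varphi\rangle\langle\varphi|$, let $\eta\ge 0$, and let $W=\mathrm{sgn}_\eta(\mathrm{Tr}_A(|\varphi\rangle\langle\psi|))$ be the canonical Uhlmann partial isometry with cutoff $\eta$ for $(|\psi\rangle,|\varphi\rangle)$. Then: (1) $W$ is a partial isometry on $B$; (2) $|\langle\varphi|(\mathrm{id}_A\otimes W)|\psi\rangle|^2\ \ge\ \mathrm{F}(\rho_A,\sigma_A)-2\eta\dim(B)$; (3) (minimality) for every partial isometry $R$ on $B$ with $\mathrm{F}(\rho_A,\sigma_A)=|\langle\varphi|(\mathrm{id}_A\otimes R)|\psi\rangle|^2$, we have $W^\dagger W\le R^\dagger R$ in the positive semidefinite order.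
   Context: Fidelity is $\mathrm{F}(\rho,\sigma)=\|\sqrt{\rho}\sqrt{\sigma}\|_1^2$ (squared convention). A linear map $U:A\to B$ is a partial isometry if $U=\tilde U\Pi$ for a projector $\Pi$ on $A$ and an isometry $\tilde U$. For $\eta\ge 0$ and an operator $K$ with singular value decomposition $K=U\Sigma V^\dagger$, define $\mathrm{sgn}_\eta(K)=U\,\mathrm{sgn}_\eta(\Sigma)V^\dagger$, where $\mathrm{sgn}_\eta(\Sigma)$ is the projector onto the span of the eigenvectors of $\Sigma$ with eigenvalue strictly greater than $\eta$. The canonical Uhlmann partial isometry with cutoff $\eta$ for a pair of pure states $(|\psi\rangle_{AB},|\varphi\rangle_{AB})$ is the operator $\mathrm{sgn}_\eta(\mathrm{Tr}_A(|\varphi\rangle\langle\psi|))$ on $B$. *)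

theory Defs
  imports Complex_Main
begin

text \<open>Registers are finite types; a vector on register 'i is a function 'i \<Rightarrow> complex;
  an operator from register 'j to register 'i is a matrix M :: 'i \<Rightarrow> 'j \<Rightarrow> complex
  (entry M i j = row i, column j) with respect to the computational bases.
  The bipartite register AB is the product type 'a \<times> 'b.\<close>

type_synonym ('i, 'j) cmat = "'i \<Rightarrow> 'j \<Rightarrow> complex"

definition mmult :: "('i, 'j::finite) cmat \<Rightarrow> ('j, 'k) cmat \<Rightarrow> ('i, 'k) cmat" (infixl "**" 70) where
  "M ** N = (\<lambda>i k. \<Sum>j\<in>UNIV. M i j * N j k)"

definition adj :: "('i, 'j) cmat \<Rightarrow> ('j, 'i) cmat" where
  "adj M = (\<lambda>i j. cnj (M j i))"

definition idm :: "('i, 'i) cmat" where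
  "idm = (\<lambda>i j. if i = j then 1 else 0)"

definition mtrace :: "('i::finite, 'i) cmat \<Rightarrow> complex" where
  "mtrace M = (\<Sum>i\<in>UNIV. M i i)"

definition psd :: "('i::finite, 'i) cmat \<Rightarrow> bool" where
  "psd M \<longleftrightarrow> (\<forall>v::'i \<Rightarrow> complex.
      let q = (\<Sum>i\<in>UNIV. \<Sum>j\<in>UNIV. cnj (v i) * M i j * v j) in Im q = 0 \<and> Re q \<ge> 0)"

definition psd_le :: "('i::finite, 'i) cmat \<Rightarrow> ('i, 'i) cmat \<Rightarrow> bool" where
  "psd_le M N \<longleftrightarrow> psd (\<lambda>i j. N i j - M i j)"

definition msqrt :: "('i::finite, 'i) cmat \<Rightarrow> ('i, 'i) cmat" where
  "msqrt M = (THE S. psd S \<and> S ** S = M)"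

definition trace_norm :: "('i::finite, 'j::finite) cmat \<Rightarrow> real" where
  "trace_norm K = Re (mtrace (msqrt (adj K ** K)))"

text \<open>Fidelity, squared convention.\<close>
definition fidelity :: "('i::finite, 'i) cmat \<Rightarrow> ('i, 'i) cmat \<Rightarrow> real" where
  "fidelity \<rho> \<sigma> = (trace_norm (msqrt \<rho> ** msqrt \<sigma>)) ^ 2"

definition isometry :: "('i::finite, 'j::finite) cmat \<Rightarrow> bool" where
  "isometry U \<longleftrightarrow> adj U ** U = idm"

definition unitary :: "('i::finite, 'i) cmat \<Rightarrow> bool" where
  "unitary U \<longleftrightarrow> adj U ** U = idm \<and> U ** adj U = idm"

definition projector :: "('i::finite, 'i) cmat \<Rightarrow> bool" where
  "projector P \<longleftrightarrow> adj P = P \<and> P ** P = P"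

definition partial_isometry :: "('i::finite, 'j::finite) cmat \<Rightarrow> bool" where
  "partial_isometry U \<longleftrightarrow> (\<exists>(Ut :: ('i, 'j) cmat) P. isometry Ut \<and> projector P \<and> U = Ut ** P)"

definition is_svd :: "('i::finite, 'i) cmat \<Rightarrow> ('i, 'i) cmat \<Rightarrow> ('i, 'i) cmat \<Rightarrow> ('i, 'i) cmat \<Rightarrow> bool" where
  "is_svd K U S V \<longleftrightarrow> unitary U \<and> unitary V
     \<and> (\<forall>i j. i \<noteq> j \<longrightarrow> S i j = 0) \<and> (\<forall>i. Im (S i i) = 0 \<and> Re (S i i) \<ge> 0)
     \<and> K = U ** S ** adj V"

definition sgn_eta :: "real \<Rightarrow> ('i::finite, 'i) cmat \<Rightarrow> ('i, 'i) cmat" where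
  "sgn_eta \<eta> K = (SOME W. \<exists>U S V. is_svd K U S V \<and>
      W = U ** (\<lambda>i j. if i = j \<and> Re (S i i) > \<eta> then 1 else 0) ** adj V)"

definition pure_state :: "('i::finite \<Rightarrow> complex) \<Rightarrow> bool" where
  "pure_state \<psi> \<longleftrightarrow> (\<Sum>x\<in>UNIV. (cmod (\<psi> x))\<^sup>2) = 1"

definition ketbra :: "('i \<Rightarrow> complex) \<Rightarrow> ('j \<Rightarrow> complex) \<Rightarrow> ('i, 'j) cmat" where
  "ketbra \<phi> \<psi> = (\<lambda>i j. \<phi> i * cnj (\<psi> j))"

definition ptrace_B :: "('a \<times> 'b::finite, 'a \<times> 'b) cmat \<Rightarrow> ('a, 'a) cmat" where
  "ptrace_B M = (\<lambda>a a'. \<Sum>b\<in>UNIV. M (a, b) (a', b))"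

definition ptrace_A :: "('a::finite \<times> 'b, 'a \<times> 'b) cmat \<Rightarrow> ('b, 'b) cmat" where
  "ptrace_A M = (\<lambda>b b'. \<Sum>a\<in>UNIV. M (a, b) (a, b'))"

definition id_tensor :: "('b, 'b) cmat \<Rightarrow> ('a \<times> 'b, 'a \<times> 'b) cmat" where
  "id_tensor R = (\<lambda>(a, b) (a', b'). if a = a' then R b b' else 0)"

definition sandwich :: "('i::finite \<Rightarrow> complex) \<Rightarrow> ('i, 'j::finite) cmat \<Rightarrow> ('j \<Rightarrow> complex) \<Rightarrow> complex" where
  "sandwich \<phi> M \<psi> = (\<Sum>i\<in>UNIV. \<Sum>j\<in>UNIV. cnj (\<phi> i) * M i j * \<psi> j)"

end

theory Submission imports Defs "HOL-Analysis.Analysis" begin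

no_notation matrix_matrix_mult (infixl "**" 70)

definition cinner :: "('n::finite \<Rightarrow> complex) \<Rightarrow> ('n \<Rightarrow> complex) \<Rightarrow> complex" where
  "cinner x y = (\<Sum>i\<in>UNIV. cnj (x i) * y i)"
definition mvec :: "('i, 'j::finite) cmat \<Rightarrow> ('j \<Rightarrow> complex) \<Rightarrow> ('i \<Rightarrow> complex)" where
  "mvec M x = (\<lambda>i. \<Sum>j\<in>UNIV. M i j * x j)"
definition vnorm2 :: "('n::finite \<Rightarrow> complex) \<Rightarrow> real" where
  "vnorm2 x = (\<Sum>i\<in>UNIV. (cmod (x i))\<^sup>2)"
definition diag :: "('n \<Rightarrow> real) \<Rightarrow> ('n,'n) cmat" where
  "diag d = (\<lambda>i j. if i = j then complex_of_real (d i) else 0)"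

lemma mmult_assoc: "((A::('i,'j::finite) cmat) ** (B::('j,'k::finite) cmat)) ** C = A ** (B ** C)"
  unfolding mmult_def
  by (auto simp: sum_distrib_left sum_distrib_right mult.assoc intro!: ext sum.swap)

lemma adj_mmult: "adj ((A::('i,'j::finite) cmat) ** B) = adj B ** adj A"
  unfolding mmult_def adj_def by (auto intro!: ext simp: mult.commute)

lemma adj_adj[simp]: "adj (adj A) = A" unfolding adj_def by auto

lemma adj_idm[simp]: "adj idm = idm" unfolding adj_def idm_def by (auto intro!: ext)

lemma idm_mmult[simp]: "idm ** (A::('i::finite,'j) cmat) = A"
proof (rule ext, rule ext)
  fix i k show "(idm ** A) i k = A i k"
    unfolding mmult_def idm_def by (simp add: if_distrib[where f="\<lambda>x. x * _"] cong: if_cong)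
qed

lemma mmult_idm[simp]: "(A::('i,'j::finite) cmat) ** idm = A"
proof (rule ext, rule ext)
  fix i k show "(A ** idm) i k = A i k"
    unfolding mmult_def idm_def by (simp add: if_distrib[where f="\<lambda>x. _ * x"] cong: if_cong)
qed

lemma mtrace_comm: "mtrace ((A::('i::finite,'j::finite) cmat) ** B) = mtrace (B ** A)"
  unfolding mtrace_def mmult_def by (subst sum.swap) (auto simp: mult.commute)

lemma mvec_mmult: "mvec (A ** B) x = mvec A (mvec B x)"
  unfolding mvec_def mmult_def
  by (auto intro!: ext simp: sum_distrib_left sum_distrib_right mult.assoc intro: sum.swap)

lemma cinner_adj: "cinner x (mvec A y) = cinner (mvec (adj A) x) y"
  unfolding cinner_def mvec_def adj_def
  by (auto simp: sum_distrib_left sum_distrib_right mult_ac intro: sum.swap)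

lemma cinner_commute: "cinner y x = cnj (cinner x y)"
  unfolding cinner_def by (auto simp: mult.commute)

lemma cnj_mult_self: "cnj z * z = complex_of_real ((cmod z)\<^sup>2)"
  by (metis complex_norm_square mult.commute)

lemma cinner_self: "cinner x x = complex_of_real (vnorm2 x)"
  unfolding cinner_def vnorm2_def of_real_sum cnj_mult_self ..

lemma vnorm2_nonneg: "vnorm2 x \<ge> 0" unfolding vnorm2_def by (auto intro: sum_nonneg)

lemma vnorm2_eq_0: "vnorm2 x = 0 \<longleftrightarrow> x = (\<lambda>_. 0)"
  unfolding vnorm2_def by (subst sum_nonneg_eq_0_iff) (auto intro!: ext)

lemma psd_form: "(\<Sum>i\<in>UNIV. \<Sum>j\<in>UNIV. cnj (v i) * M i j * v j) = cinner v (mvec M v)"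
  unfolding cinner_def mvec_def by (simp add: sum_distrib_left mult.assoc)

lemma inner_complex_cnj: "inner (a::complex) b = Re (cnj a * b)"
  by (simp add: inner_complex_def)

lemma inner_vec_fun: "inner (z::complex^'n) (\<chi> i. w i) = Re (\<Sum>i\<in>UNIV. cnj (z$i) * w i)"
  by (simp add: inner_vec_def inner_complex_cnj Re_sum)

lemma exists_orth:
  fixes u :: "'t \<Rightarrow> ('n::finite \<Rightarrow> complex)" and T :: "'t set"
  assumes "finite T" "card T < CARD('n)"
  shows "\<exists>x. x \<noteq> (\<lambda>_. 0) \<and> (\<forall>t\<in>T. cinner (u t) x = 0)"
proof -
  define B :: "(complex^'n) set" where
    "B = (\<lambda>t. \<chi> i. u t i) ` T \<union> (\<lambda>t. \<chi> i. \<i> * u t i) ` T"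
  have fB: "finite B" using assms(1) unfolding B_def by auto
  have "card B \<le> card ((\<lambda>t. \<chi> i. u t i) ` T) + card ((\<lambda>t. \<chi> i. \<i> * u t i) ` T)"
    unfolding B_def by (rule card_Un_le)
  also have "\<dots> \<le> card T + card T" by (intro add_mono card_image_le assms(1))
  finally have cB: "card B \<le> 2 * card T" by simp
  have "dim B \<le> card B" by (rule dim_le_card[OF span_superset fB])
  with cB assms(2) have "dim B < DIM(complex^'n)" by simp
  then obtain x :: "complex^'n" where x: "x \<noteq> 0" "\<And>y. y \<in> span B \<Longrightarrow> orthogonal x y"
    using orthogonal_to_subspace_exists[of B] by blast
  define x' where "x' = (\<lambda>i. x $ i)"
  have "x' \<noteq> (\<lambda>_. 0)" using x(1) unfolding x'_def by (metis vec_eq_iff zero_index)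
  moreover have "cinner (u t) x' = 0" if t: "t \<in> T" for t
  proof -
    have "orthogonal x (\<chi> i. u t i)" using t by (intro x(2) span_base) (auto simp: B_def)
    hence 1: "Re (\<Sum>i\<in>UNIV. cnj (x$i) * u t i) = 0" by (simp add: orthogonal_def inner_vec_fun)
    have "orthogonal x (\<chi> i. \<i> * u t i)" using t by (intro x(2) span_base) (auto simp: B_def)
    hence 2: "Re (\<Sum>i\<in>UNIV. cnj (x$i) * (\<i> * u t i)) = 0" by (simp add: orthogonal_def inner_vec_fun)
    define c where "c = cinner (u t) x'"
    have "(\<Sum>i\<in>UNIV. cnj (x$i) * u t i) = cnj c"
      unfolding c_def cinner_def x'_def by (simp add: mult.commute)
    with 1 have "Re c = 0" by simp
    have "(\<Sum>i\<in>UNIV. cnj (x$i) * (\<i> * u t i)) = \<i> * cnj c"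
      unfolding c_def cinner_def x'_def by (simp add: mult_ac sum_distrib_left)
    with 2 have "Im c = 0" by simp
    with \<open>Re c = 0\<close> show ?thesis unfolding c_def by (simp add: complex_eq_iff)
  qed
  ultimately show ?thesis by blast
qed

lemma cinner_expand:
  "cinner (\<lambda>i. a i + s * b i) (\<lambda>i. c i + t * d i)
    = cinner a c + t * cinner a d + cnj s * cinner b c + cnj s * t * cinner b d"
  unfolding cinner_def by (simp add: algebra_simps sum.distrib sum_distrib_left)

lemma cinner_lin_right: "cinner x (\<lambda>i. y i + t * z i) = cinner x y + t * cinner x z"
  unfolding cinner_def by (simp add: algebra_simps sum.distrib sum_distrib_left)

lemma mvec_lin: "mvec M (\<lambda>i. x i + s * w i) = (\<lambda>i. mvec M x i + s * mvec M w i)"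
  unfolding mvec_def by (auto intro!: ext simp: algebra_simps sum.distrib sum_distrib_left)

lemma mvec_scale: "mvec M (\<lambda>i. s * w i) = (\<lambda>i. s * mvec M w i)"
  unfolding mvec_def by (auto intro!: ext simp: algebra_simps sum_distrib_left)

lemma cinner_scale_right: "cinner x (\<lambda>i. c * y i) = c * cinner x y"
  unfolding cinner_def by (simp add: algebra_simps sum_distrib_left)

lemma cinner_scale_left: "cinner (\<lambda>i. c * x i) y = cnj c * cinner x y"
  unfolding cinner_def by (simp add: algebra_simps sum_distrib_left)

lemma cinner_diff_right: "cinner x (\<lambda>i. y i - z i) = cinner x y - cinner x z"
  unfolding cinner_def by (simp add: algebra_simps sum_subtractf)

lemma herm_cinner: "adj H = H \<Longrightarrow> cinner x (mvec H y) = cinner (mvec H x) y"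
  by (metis cinner_adj)

lemma herm_real: "adj H = H \<Longrightarrow> Im (cinner x (mvec H x)) = 0"
  by (metis Reals_cnj_iff cinner_commute complex_is_Real_iff herm_cinner)

lemma quad_zero:
  fixes a b :: real
  assumes "\<And>s. a * s \<le> b * s\<^sup>2" shows "a = 0"
proof (rule ccontr)
  assume a: "a \<noteq> 0"
  define s where "s = a / (2 * (\<bar>b\<bar> + 1))"
  have pos: "2 * (\<bar>b\<bar> + 1) > 0" by simp
  have "a * s = a\<^sup>2 / (2 * (\<bar>b\<bar> + 1))" unfolding s_def by (simp add: power2_eq_square)
  moreover have "b * s\<^sup>2 \<le> \<bar>b\<bar> * s\<^sup>2" by (intro mult_right_mono) auto
  moreover have "\<bar>b\<bar> * s\<^sup>2 = a\<^sup>2 * (\<bar>b\<bar> / (2 * (\<bar>b\<bar> + 1))) / (2 * (\<bar>b\<bar> + 1))"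
    unfolding s_def by (simp add: power2_eq_square field_simps)
  moreover have "\<bar>b\<bar> / (2 * (\<bar>b\<bar> + 1)) < 1" using pos by (simp add: field_simps)
  moreover have "a\<^sup>2 > 0" using a by simp
  ultimately have "a * s > b * s\<^sup>2"
    by (smt (verit) divide_strict_right_mono mult_less_cancel_left2 pos)
  with assms[of s] show False by simp
qed

lemma norm_vec_sq: "(norm (y::complex^'n))\<^sup>2 = vnorm2 (\<lambda>i. y$i)"
  unfolding power2_norm_eq_inner inner_vec_def vnorm2_def by (simp add: dot_square_norm)

lemma vnorm2_scale: "vnorm2 (\<lambda>i. c * x i) = (cmod c)\<^sup>2 * vnorm2 x"
  unfolding vnorm2_def by (simp add: norm_mult power_mult_distrib sum_distrib_left)

lemma vec_nth_lambda[simp]: "vec_nth (vec_lambda f) = f"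
  by (rule ext) simp

lemma cmod_inv_sqrt: "v > 0 \<Longrightarrow> (cmod (complex_of_real (1 / sqrt v)))\<^sup>2 = 1 / v"
  by (simp only: norm_of_real) (simp add: power_divide)

lemma norm_normalized:
  assumes "vnorm2 z > 0"
  shows "norm (\<chi> i. complex_of_real (1 / sqrt (vnorm2 z)) * z i) = 1"
proof -
  have "(cmod (complex_of_real (1 / sqrt (vnorm2 z))))\<^sup>2 * vnorm2 z = 1"
    using assms by (subst cmod_inv_sqrt[OF assms]) simp
  hence "(norm (\<chi> i. complex_of_real (1 / sqrt (vnorm2 z)) * z i))\<^sup>2 = 1"
    unfolding norm_vec_sq vec_nth_lambda vnorm2_scale .
  thus ?thesis by (simp add: power2_eq_1_iff) (smt (verit) norm_ge_zero)
qed

lemma eigvec_exists: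
  fixes H :: "('n::finite,'n) cmat" and u :: "'t \<Rightarrow> 'n \<Rightarrow> complex"
  assumes herm: "adj H = H" and fin: "finite T" and card: "card T < CARD('n)"
    and inv: "\<And>x. (\<forall>t\<in>T. cinner (u t) x = 0) \<Longrightarrow> (\<forall>t\<in>T. cinner (u t) (mvec H x) = 0)"
  shows "\<exists>v c. (\<forall>t\<in>T. cinner (u t) v = 0) \<and> vnorm2 v = 1 \<and> mvec H v = (\<lambda>i. c * v i)"
proof -
  define S where "S = {x. \<forall>t\<in>T. cinner (u t) x = 0}"
  have S_lin: "(\<lambda>i. x i + s * w i) \<in> S" if "x \<in> S" "w \<in> S" for x w s
    using that unfolding S_def cinner_def
    by (simp add: algebra_simps sum.distrib sum_distrib_left flip: sum_distrib_left)
  have S_scale: "(\<lambda>i. s * w i) \<in> S" if "w \<in> S" for w s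
    using that unfolding S_def by (simp add: cinner_scale_right)
  have S_inv: "mvec H x \<in> S" if "x \<in> S" for x using inv that unfolding S_def by auto
  define q where "q x = Re (cinner x (mvec H x))" for x
  define C where "C = {y::complex^'n. (\<lambda>i. y$i) \<in> S \<and> norm y = 1}"
  define f where "f y = q (\<lambda>i. y$i)" for y :: "complex^'n"
  obtain x0 where x0: "x0 \<noteq> (\<lambda>_. 0)" "x0 \<in> S"
    using exists_orth[OF fin card, of u] unfolding S_def by auto
  have "vnorm2 x0 > 0" using x0(1) vnorm2_eq_0 vnorm2_nonneg by (metis less_eq_real_def)
  define y0 :: "complex^'n" where "y0 = (\<chi> i. complex_of_real (1 / sqrt (vnorm2 x0)) * x0 i)"
  have "(\<lambda>i. y0$i) = (\<lambda>i. complex_of_real (1 / sqrt (vnorm2 x0)) * x0 i)" unfolding y0_def by simp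
  hence "y0 \<in> C" unfolding C_def
    using S_scale[OF x0(2), of "complex_of_real (1 / sqrt (vnorm2 x0))"]
      norm_normalized[OF \<open>vnorm2 x0 > 0\<close>]
    unfolding y0_def by simp
  hence Cne: "C \<noteq> {}" by auto
  have contS: "continuous_on UNIV (\<lambda>y::complex^'n. cinner (u t) (\<lambda>i. y$i))" for t
    unfolding cinner_def by (intro continuous_intros)
  have "closed C"
  proof -
    have "C = {y. \<forall>t. t \<in> T \<longrightarrow> cinner (u t) (\<lambda>i. y$i) = 0} \<inter> {y. norm y = 1}"
      unfolding C_def S_def by auto
    moreover have "closed {y::complex^'n. \<forall>t. t \<in> T \<longrightarrow> cinner (u t) (\<lambda>i. y$i) = 0}"
      by (intro closed_Collect_all closed_Collect_imp closed_Collect_eq open_Collect_const contS continuous_intros)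
    moreover have "closed {y::complex^'n. norm y = 1}"
      by (intro closed_Collect_eq continuous_intros)
    ultimately show ?thesis by auto
  qed
  moreover have "bounded C" by (rule bounded_subset[of "cball 0 1"]) (auto simp: C_def)
  ultimately have "compact C" by (simp add: compact_eq_bounded_closed)
  moreover have "continuous_on C f"
    unfolding f_def q_def cinner_def mvec_def by (intro continuous_intros)
  ultimately obtain v where v: "v \<in> C" "\<And>y. y \<in> C \<Longrightarrow> f y \<le> f v"
    using continuous_attains_sup[OF _ Cne] by blast
  define x where "x = (\<lambda>i. v$i)"
  have xS: "x \<in> S" and x1: "vnorm2 x = 1"
    using v(1) unfolding C_def x_def by (auto simp: norm_vec_sq[symmetric])
  have qscale: "q (\<lambda>i. c * z i) = (cmod c)\<^sup>2 * q z" for c z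
    unfolding q_def mvec_scale cinner_scale_left cinner_scale_right
    by (simp add: mult.assoc[symmetric] cnj_mult_self)
  have maxprop: "q z \<le> q x * vnorm2 z" if zS: "z \<in> S" for z
  proof (cases "z = (\<lambda>_. 0)")
    case True thus ?thesis by (simp add: q_def cinner_def vnorm2_def)
  next
    case False
    hence "vnorm2 z > 0" using vnorm2_eq_0 vnorm2_nonneg by (metis less_eq_real_def)
    define y :: "complex^'n" where "y = (\<chi> i. complex_of_real (1 / sqrt (vnorm2 z)) * z i)"
    have yy: "(\<lambda>i. y$i) = (\<lambda>i. complex_of_real (1 / sqrt (vnorm2 z)) * z i)" unfolding y_def by simp
    hence "y \<in> C" unfolding C_def
      using S_scale[OF zS, of "complex_of_real (1 / sqrt (vnorm2 z))"]
        norm_normalized[OF \<open>vnorm2 z > 0\<close>]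
      unfolding y_def by simp
    hence "f y \<le> f v" by (rule v(2))
    hence "(cmod (complex_of_real (1 / sqrt (vnorm2 z))))\<^sup>2 * q z \<le> q x"
      unfolding f_def yy x_def[symmetric] qscale .
    hence "q z / vnorm2 z \<le> q x" by (subst (asm) cmod_inv_sqrt[OF \<open>vnorm2 z > 0\<close>]) simp
    thus ?thesis using \<open>vnorm2 z > 0\<close> by (simp add: field_simps)
  qed
  have key: "cinner w (mvec H x) = 0" if wS: "w \<in> S" and wx: "cinner x w = 0" for w
  proof -
    have re0: "Re (cinner w' (mvec H x)) = 0" if wS': "w' \<in> S" and wx': "cinner x w' = 0" for w'
    proof -
      have wx2: "cinner w' x = 0" using wx' cinner_commute by (metis complex_cnj_zero)
      have xHw: "cinner x (mvec H w') = cnj (cinner w' (mvec H x))"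
        using herm_cinner[OF herm] cinner_commute by metis
      have "Re (cinner w' (mvec H x)) * (2 * s) \<le> (q x * vnorm2 w' - q w') * s\<^sup>2" for s :: real
      proof -
        define z where "z = (\<lambda>i. x i + complex_of_real s * w' i)"
        have "q z \<le> q x * vnorm2 z" using maxprop S_lin[OF xS wS'] unfolding z_def by blast
        moreover have "complex_of_real (vnorm2 z) = 1 + complex_of_real (s\<^sup>2 * vnorm2 w')"
          unfolding cinner_self[symmetric] z_def cinner_expand
          by (simp add: cinner_self wx' wx2 x1 power2_eq_square)
        hence "vnorm2 z = 1 + s\<^sup>2 * vnorm2 w'"
          by (metis of_real_1 of_real_add of_real_eq_iff)
        moreover have "q z = q x + 2 * s * Re (cinner w' (mvec H x)) + s\<^sup>2 * q w'"
          unfolding q_def z_def mvec_lin cinner_expand xHw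
          by (simp add: power2_eq_square algebra_simps)
        ultimately show ?thesis by (simp add: algebra_simps)
      qed
      hence "Re (cinner w' (mvec H x)) * 2 = 0"
        by (intro quad_zero[where b = "q x * vnorm2 w' - q w'"]) (simp add: mult.assoc mult.left_commute)
      thus ?thesis by simp
    qed
    have "Re (cinner w (mvec H x)) = 0" by (rule re0[OF wS wx])
    moreover have "Re (cinner (\<lambda>i. \<i> * w i) (mvec H x)) = 0"
      by (rule re0[OF S_scale[OF wS]]) (simp add: cinner_scale_right wx)
    hence "Im (cinner w (mvec H x)) = 0" by (simp add: cinner_scale_left)
    ultimately show ?thesis by (simp add: complex_eq_iff)
  qed
  define c0 where "c0 = cinner x (mvec H x)"
  define w where "w = (\<lambda>i. mvec H x i + (- c0) * x i)"
  have wS: "w \<in> S" unfolding w_def by (rule S_lin[OF S_inv[OF xS] xS])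
  have "cinner x w = c0 - c0 * cinner x x"
    unfolding w_def cinner_lin_right c0_def by simp
  hence xw: "cinner x w = 0" by (simp add: cinner_self x1)
  have "cinner w w = cinner w (\<lambda>i. mvec H x i + (- c0) * x i)"
    by (subst (2) w_def) (rule refl)
  also have "\<dots> = cinner w (mvec H x) + (- c0) * cinner w x" by (rule cinner_lin_right)
  also have "\<dots> = 0" using key[OF wS xw] xw cinner_commute[of w x] by simp
  finally have "w = (\<lambda>_. 0)" by (simp add: cinner_self vnorm2_eq_0)
  hence "mvec H x = (\<lambda>i. c0 * x i)" unfolding w_def by (auto intro!: ext simp: fun_eq_iff)
  thus ?thesis using xS x1 unfolding S_def by blast
qed

definition orthon :: "'t set \<Rightarrow> ('t \<Rightarrow> 'n::finite \<Rightarrow> complex) \<Rightarrow> bool" where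
  "orthon J u \<longleftrightarrow> (\<forall>i\<in>J. \<forall>j\<in>J. cinner (u i) (u j) = (if i = j then 1 else 0))"

definition eigfam :: "('n::finite,'n) cmat \<Rightarrow> 't set \<Rightarrow> ('t \<Rightarrow> 'n \<Rightarrow> complex) \<Rightarrow> bool" where
  "eigfam H J u \<longleftrightarrow> (\<forall>j\<in>J. \<exists>c. mvec H (u j) = (\<lambda>i. c * u j i))"

lemma family_extend:
  fixes H :: "('n::finite,'n) cmat" and u :: "'n \<Rightarrow> 'n \<Rightarrow> complex"
  assumes "adj H = H" "orthon J u" "eigfam H J u"
  shows "\<exists>u'. (\<forall>j\<in>J. u' j = u j) \<and> orthon UNIV u' \<and> eigfam H UNIV u'"
  using assms(2,3)
proof (induction "card (UNIV - J)" arbitrary: J u)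
  case 0
  hence "J = UNIV" by auto
  thus ?case using 0 by auto
next
  case (Suc m)
  have cd: "card (UNIV - J) = CARD('n) - card J" by (simp add: card_Diff_subset)
  have "UNIV - J \<noteq> {}" using Suc.hyps(2) by (metis card.empty nat.distinct(1))
  then obtain k where k: "k \<notin> J" by blast
  have "card J < CARD('n)" using cd Suc.hyps(2) by linarith
  moreover have "\<forall>t\<in>J. cinner (u t) (mvec H x) = 0" if "\<forall>t\<in>J. cinner (u t) x = 0" for x
  proof
    fix t assume t: "t \<in> J"
    then obtain c where c: "mvec H (u t) = (\<lambda>i. c * u t i)" using Suc.prems(2) unfolding eigfam_def by auto
    have "cinner (u t) (mvec H x) = cinner (mvec H (u t)) x" by (rule herm_cinner[OF assms(1)])
    also have "\<dots> = cnj c * cinner (u t) x" unfolding c cinner_scale_left ..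
    finally show "cinner (u t) (mvec H x) = 0" using that t by simp
  qed
  ultimately obtain v c where v: "\<forall>t\<in>J. cinner (u t) v = 0" "vnorm2 v = 1" "mvec H v = (\<lambda>i. c * v i)"
    using eigvec_exists[OF assms(1) finite, of J u] by blast
  define u1 where "u1 = u(k := v)"
  have "orthon (insert k J) u1"
  proof -
    have vv: "cinner v v = 1" using v(2) by (simp add: cinner_self)
    have vu: "\<forall>t\<in>J. cinner v (u t) = 0" using v(1) by (metis cinner_commute complex_cnj_zero)
    show ?thesis
      unfolding orthon_def u1_def using Suc.prems(1) v(1) vv vu k
      by (auto simp: orthon_def)
  qed
  moreover have "eigfam H (insert k J) u1"
    unfolding eigfam_def u1_def using Suc.prems(2) v(3) k by (auto simp: eigfam_def)
  moreover have "m = card (UNIV - insert k J)"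
  proof -
    have "UNIV - insert k J = (UNIV - J) - {k}" by auto
    moreover have "card ((UNIV - J) - {k}) = card (UNIV - J) - 1"
      using k by (intro card_Diff_singleton) auto
    ultimately show ?thesis using Suc.hyps(2) by simp
  qed
  ultimately obtain u' where u': "\<forall>j\<in>insert k J. u' j = u1 j" "orthon UNIV u'" "eigfam H UNIV u'"
    using Suc.hyps(1) by blast
  have "\<forall>j\<in>J. u' j = u j"
  proof
    fix j assume j: "j \<in> J"
    hence "j \<noteq> k" using k by auto
    thus "u' j = u j" using u'(1) j unfolding u1_def by simp
  qed
  thus ?case using u'(2,3) by blast
qed

definition cols :: "('j \<Rightarrow> 'i \<Rightarrow> complex) \<Rightarrow> ('i,'j) cmat" where "cols u = (\<lambda>i j. u j i)"

lemma adj_mmult_cinner: "(adj A ** B) i j = cinner (\<lambda>k. A k i) (\<lambda>k. B k j)"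
  unfolding mmult_def adj_def cinner_def by simp

lemma orthon_cols: "orthon UNIV u \<Longrightarrow> adj (cols u) ** cols u = idm"
  unfolding orthon_def by (auto intro!: ext simp: adj_mmult_cinner cols_def idm_def)

lemma mmult_diag: "A ** diag d = (\<lambda>i j. A i j * complex_of_real (d j))"
  unfolding mmult_def diag_def by (auto intro!: ext simp: if_distrib[where f="\<lambda>x. _ * x"] cong: if_cong)

lemma diag_mmult: "diag d ** A = (\<lambda>i j. complex_of_real (d i) * A i j)"
  unfolding mmult_def diag_def by (auto intro!: ext simp: if_distrib[where f="\<lambda>x. x * _"] cong: if_cong)

lemma adj_diag[simp]: "adj (diag d) = diag d"
  unfolding adj_def diag_def by (auto intro!: ext)

lemma diag_diag: "diag a ** diag b = diag (\<lambda>i. a i * b i)"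
  unfolding mmult_diag by (auto intro!: ext simp: diag_def)

lemma mtrace_diag_mmult: "mtrace (diag d ** A) = (\<Sum>i\<in>UNIV. complex_of_real (d i) * A i i)"
  unfolding mtrace_def diag_mmult by simp

lemma mmult_diff_left: "(\<lambda>i j. A i j - B i j) ** C = (\<lambda>i j. (A ** C) i j - (B ** C) i j)"
  unfolding mmult_def by (auto intro!: ext simp: algebra_simps sum_subtractf)

lemma mmult_diff_right: "C ** (\<lambda>i j. A i j - B i j) = (\<lambda>i j. (C ** A) i j - (C ** B) i j)"
  unfolding mmult_def by (auto intro!: ext simp: algebra_simps sum_subtractf)

lemma mtrace_diff: "mtrace (\<lambda>i j. A i j - B i j) = mtrace A - mtrace B"
  unfolding mtrace_def by (simp add: sum_subtractf)

lemma adj_diff: "adj (\<lambda>i j. A i j - B i j) = (\<lambda>i j. adj A i j - adj B i j)"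
  unfolding adj_def by auto

lemma mtrace_idm: "mtrace (idm :: ('n::finite,'n) cmat) = of_nat CARD('n)"
  unfolding mtrace_def idm_def by simp

lemma mtrace_adj_self: "mtrace (adj Q ** Q) = complex_of_real (\<Sum>i\<in>UNIV. \<Sum>k\<in>UNIV. (cmod (Q k i))\<^sup>2)"
  unfolding mtrace_def adj_def mmult_def of_real_sum cnj_mult_self ..

lemma frob_zero: "mtrace (adj Q ** Q) = 0 \<Longrightarrow> Q = (\<lambda>_ _. 0)"
proof -
  assume "mtrace (adj Q ** Q) = 0"
  hence "(\<Sum>i\<in>UNIV. \<Sum>k\<in>UNIV. (cmod (Q k i))\<^sup>2) = 0" unfolding mtrace_adj_self
    by (simp only: of_real_eq_0_iff)
  hence s0: "\<forall>i. (\<Sum>k\<in>UNIV. (cmod (Q k i))\<^sup>2) = 0"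
    by (subst (asm) sum_nonneg_eq_0_iff) (auto intro: sum_nonneg)
  show ?thesis
  proof (rule ext, rule ext)
    fix k i
    have "(\<Sum>k\<in>UNIV. (cmod (Q k i))\<^sup>2) = 0" using s0 by blast
    hence "(cmod (Q k i))\<^sup>2 = 0" using sum_nonneg_eq_0_iff[of UNIV "\<lambda>k. (cmod (Q k i))\<^sup>2"] by simp
    thus "Q k i = 0" by simp
  qed
qed

lemma square_unitary:
  fixes U :: "('n::finite,'n) cmat"
  assumes "adj U ** U = idm" shows "U ** adj U = idm"
proof -
  define P where "P = U ** adj U"
  define Q where "Q = (\<lambda>i j. idm i j - P i j)"
  have "P ** P = U ** ((adj U ** U) ** adj U)" unfolding P_def by (simp only: mmult_assoc)
  hence PP: "P ** P = P" unfolding assms P_def by simp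
  have aP: "adj P = P" unfolding P_def by (simp add: adj_mmult)
  have aQ: "adj Q = Q" unfolding Q_def adj_diff aP by simp
  have QQ: "Q ** Q = Q" unfolding Q_def mmult_diff_left mmult_diff_right PP by simp
  have "mtrace P = mtrace (adj U ** U)" unfolding P_def by (rule mtrace_comm)
  hence "mtrace Q = 0" unfolding Q_def mtrace_diff assms by simp
  hence "mtrace (adj Q ** Q) = 0" using aQ QQ by simp
  hence "Q = (\<lambda>_ _. 0)" by (rule frob_zero)
  hence Q0: "Q = (\<lambda>_ _. 0)" .
  have "P = idm"
  proof (rule ext, rule ext)
    fix i j have "Q i j = 0" using Q0 by simp
    thus "P i j = idm i j" unfolding Q_def by simp
  qed
  thus ?thesis unfolding P_def .
qed

lemma spectral:
  fixes H :: "('n::finite,'n) cmat"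
  assumes herm: "adj H = H"
  shows "\<exists>(U::('n,'n) cmat) d. adj U ** U = idm \<and> U ** adj U = idm \<and> H = U ** diag d ** adj U"
proof -
  obtain u :: "'n \<Rightarrow> 'n \<Rightarrow> complex" where u: "orthon UNIV u" "eigfam H UNIV u"
    using family_extend[OF herm, of "{}" "\<lambda>_ _. 0"] unfolding orthon_def eigfam_def by auto
  define U where "U = cols u"
  define d where "d j = Re (cinner (u j) (mvec H (u j)))" for j
  have ev: "mvec H (u j) = (\<lambda>i. complex_of_real (d j) * u j i)" for j
  proof -
    obtain c where c: "mvec H (u j) = (\<lambda>i. c * u j i)" using u(2) unfolding eigfam_def by auto
    have "cinner (u j) (u j) = 1" using u(1) unfolding orthon_def by auto
    hence "cinner (u j) (mvec H (u j)) = c" unfolding c cinner_scale_right by simp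
    moreover have "Im (cinner (u j) (mvec H (u j))) = 0" by (rule herm_real[OF herm])
    ultimately have "c = complex_of_real (d j)" unfolding d_def by (simp add: complex_eq_iff)
    thus ?thesis using c by simp
  qed
  have U1: "adj U ** U = idm" unfolding U_def by (rule orthon_cols[OF u(1)])
  have U2: "U ** adj U = idm" by (rule square_unitary[OF U1])
  have HU: "H ** U = U ** diag d"
  proof (rule ext, rule ext)
    fix i j
    have "(H ** U) i j = mvec H (u j) i" unfolding U_def cols_def mmult_def mvec_def by simp
    also have "\<dots> = (U ** diag d) i j" unfolding ev mmult_diag U_def cols_def by simp
    finally show "(H ** U) i j = (U ** diag d) i j" .
  qed
  have "H = H ** (U ** adj U)" using U2 by simp
  also have "\<dots> = U ** diag d ** adj U" by (simp add: HU flip: mmult_assoc)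
  finally show ?thesis using U1 U2 by (intro exI[of _ U] exI[of _ d]) auto
qed


lemma psd_iff: "psd M \<longleftrightarrow> (\<forall>v. Im (cinner v (mvec M v)) = 0 \<and> Re (cinner v (mvec M v)) \<ge> 0)"
  unfolding psd_def Let_def psd_form ..

definition evec :: "'n \<Rightarrow> 'n \<Rightarrow> complex" where "evec i = (\<lambda>k. if k = i then 1 else 0)"

lemma cinner_evec: "cinner (evec i) z = z i"
proof -
  have "(\<Sum>k\<in>UNIV. cnj (if k = i then 1 else 0) * z k) = (\<Sum>k\<in>UNIV. if k = i then z k else 0)"
    by (rule sum.cong) auto
  thus ?thesis unfolding cinner_def evec_def by simp
qed

lemma mvec_evec: "mvec M (evec j) = (\<lambda>i. M i j)"
  unfolding mvec_def evec_def by (auto intro!: ext simp: if_distrib[where f="\<lambda>x. _ * x"] cong: if_cong)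

lemma mvec_diff: "mvec (\<lambda>i j. A i j - B i j) x = (\<lambda>i. mvec A x i - mvec B x i)"
  unfolding mvec_def by (auto intro!: ext simp: algebra_simps sum_subtractf)

lemma mvec_vdiff: "mvec M (\<lambda>i. x i - y i) = (\<lambda>i. mvec M x i - mvec M y i)"
  unfolding mvec_def by (auto intro!: ext simp: algebra_simps sum_subtractf)

lemma cinner_vdiff_left: "cinner (\<lambda>i. x i - y i) z = cinner x z - cinner y z"
  unfolding cinner_def by (simp add: algebra_simps sum_subtractf)

lemma psd_herm:
  assumes "psd M" shows "adj M = M"
proof -
  have real: "Im (cinner v (mvec M v)) = 0" for v using assms unfolding psd_iff by auto
  have sym: "cinner y (mvec M x) = cnj (cinner x (mvec M y))" for x y
  proof -
    define a where "a = cinner x (mvec M y)"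
    define b where "b = cinner y (mvec M x)"
    have e1: "cinner (\<lambda>k. x k + 1 * y k) (mvec M (\<lambda>k. x k + 1 * y k))
          = cinner x (mvec M x) + a + b + cinner y (mvec M y)"
      unfolding mvec_lin cinner_expand a_def b_def by simp
    have e2: "cinner (\<lambda>k. x k + \<i> * y k) (mvec M (\<lambda>k. x k + \<i> * y k))
          = cinner x (mvec M x) + \<i> * a - \<i> * b + cinner y (mvec M y)"
      unfolding mvec_lin cinner_expand a_def b_def by (simp add: algebra_simps)
    have "Im (a + b) = 0" using e1 real[of x] real[of y] real[of "\<lambda>k. x k + 1 * y k"] by simp
    moreover have "Re (a - b) = 0" using e2 real[of x] real[of y] real[of "\<lambda>k. x k + \<i> * y k"] by simp
    ultimately show ?thesis unfolding a_def[symmetric] b_def[symmetric] by (simp add: complex_eq_iff)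
  qed
  show ?thesis
  proof (rule ext, rule ext)
    fix i j
    show "adj M i j = M i j"
      using sym[of "evec j" "evec i"] unfolding adj_def cinner_evec mvec_evec by simp
  qed
qed

lemma psd_zero_form:
  assumes "psd S" "Re (cinner v (mvec S v)) = 0" shows "mvec S v = (\<lambda>_. 0)"
proof -
  have herm: "adj S = S" by (rule psd_herm[OF assms(1)])
  have nn: "Re (cinner x (mvec S x)) \<ge> 0" for x using assms(1) unfolding psd_iff by auto
  have re0: "Re (cinner w (mvec S v)) = 0" for w
  proof -
    have "(- 2 * Re (cinner w (mvec S v))) * s \<le> Re (cinner w (mvec S w)) * s\<^sup>2" for s :: real
    proof -
      have "cinner v (mvec S w) = cinner (mvec S v) w" by (rule herm_cinner[OF herm])
      also have "\<dots> = cnj (cinner w (mvec S v))" by (rule cinner_commute)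
      finally have vSw: "cinner v (mvec S w) = cnj (cinner w (mvec S v))" .
      have "cinner (\<lambda>i. v i + complex_of_real s * w i) (mvec S (\<lambda>i. v i + complex_of_real s * w i))
        = cinner v (mvec S v) + complex_of_real s * cnj (cinner w (mvec S v))
          + complex_of_real s * cinner w (mvec S v) + complex_of_real (s\<^sup>2) * cinner w (mvec S w)"
        unfolding mvec_lin cinner_expand vSw by (simp add: power2_eq_square)
      hence "Re (cinner (\<lambda>i. v i + complex_of_real s * w i) (mvec S (\<lambda>i. v i + complex_of_real s * w i)))
        = 2 * s * Re (cinner w (mvec S v)) + s\<^sup>2 * Re (cinner w (mvec S w))"
        using assms(2) by simp
      with nn[of "\<lambda>i. v i + complex_of_real s * w i"] show ?thesis by (simp add: algebra_simps)
    qed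
    hence "- 2 * Re (cinner w (mvec S v)) = 0" by (rule quad_zero)
    thus ?thesis by simp
  qed
  have "cinner w (mvec S v) = 0" for w
  proof -
    have "Re (cinner (\<lambda>i. \<i> * w i) (mvec S v)) = 0" by (rule re0)
    hence "Im (cinner w (mvec S v)) = 0" by (simp add: cinner_scale_left)
    with re0[of w] show ?thesis by (simp add: complex_eq_iff)
  qed
  from this[of "mvec S v"] have "vnorm2 (mvec S v) = 0"
    by (simp only: cinner_self of_real_eq_0_iff)
  thus ?thesis by (simp only: vnorm2_eq_0)
qed

lemma cinner_diag: "cinner w (mvec (diag g) w) = complex_of_real (\<Sum>k\<in>UNIV. g k * (cmod (w k))\<^sup>2)"
proof -
  have "mvec (diag g) w = (\<lambda>i. complex_of_real (g i) * w i)"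
    unfolding mvec_def diag_def by (auto intro!: ext simp: if_distrib[where f="\<lambda>x. x * _"] cong: if_cong)
  thus ?thesis unfolding cinner_def of_real_sum
    by (simp add: mult.left_commute[of "cnj _"] cnj_mult_self)
qed

lemma psd_conj:
  fixes A :: "('m::finite,'n::finite) cmat"
  assumes "\<And>k. g k \<ge> 0" shows "psd (A ** diag g ** adj A)"
  unfolding psd_iff
proof
  fix v
  have "cinner v (mvec (A ** diag g ** adj A) v) = cinner (mvec (adj A) v) (mvec (diag g) (mvec (adj A) v))"
    unfolding mvec_mmult cinner_adj ..
  also have "\<dots> = complex_of_real (\<Sum>k\<in>UNIV. g k * (cmod (mvec (adj A) v k))\<^sup>2)" by (rule cinner_diag)
  finally show "Im (cinner v (mvec (A ** diag g ** adj A) v)) = 0 \<and> 0 \<le> Re (cinner v (mvec (A ** diag g ** adj A) v))"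
    using assms by (simp add: sum_nonneg)
qed

lemma col_eig:
  fixes U :: "('n::finite,'n) cmat"
  assumes "H = U ** diag d ** adj U" "adj U ** U = idm"
  shows "mvec H (\<lambda>i. U i j) = (\<lambda>i. complex_of_real (d j) * U i j)"
proof -
  have "H ** U = U ** diag d" unfolding assms(1) by (simp add: mmult_assoc assms(2))
  hence "(H ** U) i j = (U ** diag d) i j" for i by simp
  thus ?thesis unfolding mmult_diag by (auto intro!: ext simp: mmult_def mvec_def mult.commute)
qed

lemma col_norm:
  fixes U :: "('n::finite,'m::finite) cmat"
  assumes "adj U ** U = idm" shows "cinner (\<lambda>i. U i j) (\<lambda>i. U i k) = (if j = k then 1 else 0)"
  using fun_cong[OF fun_cong[OF assms, of j], of k] unfolding adj_mmult_cinner idm_def by simp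

lemma psd_sqrt_unique:
  fixes S1 S2 :: "('n::finite,'n) cmat"
  assumes p1: "psd S1" and p2: "psd S2" and eq: "S1 ** S1 = S2 ** S2"
  shows "S1 = S2"
proof -
  define D where "D = (\<lambda>i j. S1 i j - S2 i j)"
  have h1: "adj S1 = S1" by (rule psd_herm[OF p1])
  have h2: "adj S2 = S2" by (rule psd_herm[OF p2])
  have hD: "adj D = D" unfolding D_def adj_diff h1 h2 ..
  obtain U :: "('n,'n) cmat" and d where U: "adj U ** U = idm" "U ** adj U = idm" "D = U ** diag d ** adj U"
    using spectral[OF hD] by blast
  have d0: "d j = 0" for j
  proof (rule ccontr)
    assume dj: "d j \<noteq> 0"
    define v where "v = (\<lambda>i. U i j)"
    have Dv: "mvec D v = (\<lambda>i. complex_of_real (d j) * v i)" unfolding v_def by (rule col_eig[OF U(3,1)])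
    have vv: "cinner v v = 1" unfolding v_def using col_norm[OF U(1), of j j] by simp
    have "cinner v (mvec S1 (mvec D v)) + cinner v (mvec D (mvec S2 v))
        = cinner v (mvec (S1 ** S1) v) - cinner v (mvec (S2 ** S2) v)"
      unfolding D_def mvec_diff mvec_vdiff mvec_mmult cinner_diff_right by simp
    also have "\<dots> = 0" using eq by simp
    finally have e0: "cinner v (mvec S1 (mvec D v)) + cinner v (mvec D (mvec S2 v)) = 0" .
    have "cinner v (mvec S1 (mvec D v)) = complex_of_real (d j) * cinner v (mvec S1 v)"
      unfolding Dv mvec_scale cinner_scale_right ..
    moreover have "cinner v (mvec D (mvec S2 v)) = complex_of_real (d j) * cinner v (mvec S2 v)"
      unfolding herm_cinner[OF hD] Dv cinner_scale_left by simp
    ultimately have "complex_of_real (d j) * (cinner v (mvec S1 v) + cinner v (mvec S2 v)) = 0"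
      using e0 by (simp add: algebra_simps)
    hence sum0: "cinner v (mvec S1 v) + cinner v (mvec S2 v) = 0" using dj by simp
    have "Re (cinner v (mvec S1 v)) \<ge> 0" "Re (cinner v (mvec S2 v)) \<ge> 0"
      using p1 p2 unfolding psd_iff by auto
    moreover have "Re (cinner v (mvec S1 v)) + Re (cinner v (mvec S2 v)) = 0"
      using arg_cong[OF sum0, of Re] by simp
    ultimately have "Re (cinner v (mvec S1 v)) = 0" "Re (cinner v (mvec S2 v)) = 0" by linarith+
    hence "mvec S1 v = (\<lambda>_. 0)" "mvec S2 v = (\<lambda>_. 0)"
      using psd_zero_form[OF p1, of v] psd_zero_form[OF p2, of v] by simp_all
    hence "mvec D v = (\<lambda>_. 0)" unfolding D_def mvec_diff by simp
    hence "(\<lambda>i. complex_of_real (d j) * v i) = (\<lambda>_. 0)" using Dv by simp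
    hence "v = (\<lambda>_. 0)" using dj by (auto simp: fun_eq_iff)
    with vv show False by (simp add: cinner_def)
  qed
  have "diag d = (\<lambda>_ _. 0)" using d0 unfolding diag_def by (auto intro!: ext)
  hence D0: "D = (\<lambda>_ _. 0)" unfolding U(3) by (simp add: mmult_def)
  show ?thesis
  proof (rule ext, rule ext)
    fix i j have "D i j = 0" using D0 by simp
    thus "S1 i j = S2 i j" unfolding D_def by simp
  qed
qed

lemma psd_spectral:
  fixes M :: "('n::finite,'n) cmat"
  assumes "psd M"
  shows "\<exists>(U::('n,'n) cmat) d. adj U ** U = idm \<and> U ** adj U = idm \<and> M = U ** diag d ** adj U \<and> (\<forall>j. d j \<ge> 0)"
proof -
  obtain U :: "('n,'n) cmat" and d where U: "adj U ** U = idm" "U ** adj U = idm" "M = U ** diag d ** adj U"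
    using spectral[OF psd_herm[OF assms]] by blast
  have dnn: "d j \<ge> 0" for j
  proof -
    define v where "v = (\<lambda>i. U i j)"
    have Mv: "mvec M v = (\<lambda>i. complex_of_real (d j) * v i)" unfolding v_def by (rule col_eig[OF U(3,1)])
    have vv: "cinner v v = 1" unfolding v_def using col_norm[OF U(1), of j j] by simp
    have "cinner v (mvec M v) = complex_of_real (d j)" unfolding Mv cinner_scale_right vv by simp
    moreover have "Re (cinner v (mvec M v)) \<ge> 0" using assms unfolding psd_iff by blast
    ultimately show ?thesis by simp
  qed
  thus ?thesis using U by blast
qed

lemma msqrt_eq:
  assumes "psd S" "S ** S = M" shows "msqrt M = S"
  unfolding msqrt_def
proof (rule the_equality)
  show "psd S \<and> S ** S = M" using assms by simp
next
  fix S' assume a: "psd S' \<and> S' ** S' = M"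
  show "S' = S"
  proof (rule psd_sqrt_unique)
    show "psd S'" using a by simp
    show "psd S" by (rule assms(1))
    show "S' ** S' = S ** S" using a assms(2) by simp
  qed
qed

lemma psd_gram: "psd (adj (Y::('m::finite,'n::finite) cmat) ** Y)"
proof -
  have "psd (adj Y ** diag (\<lambda>_. 1) ** adj (adj Y))" by (rule psd_conj) simp
  moreover have "diag (\<lambda>_. 1) = (idm :: ('m,'m) cmat)" unfolding diag_def idm_def by (auto intro!: ext)
  ultimately show ?thesis by simp
qed

lemma psd_gram': "psd ((Y::('m::finite,'n::finite) cmat) ** adj Y)"
  using psd_gram[of "adj Y"] by simp

lemma unit_conj: "adj (U::('n::finite,'m::finite) cmat) ** U = idm \<Longrightarrow> adj U ** (U ** D ** adj U) ** U = D"
proof -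
  assume a: "adj U ** U = idm"
  have "adj U ** (U ** D ** adj U) ** U = (adj U ** U) ** D ** (adj U ** U)" by (simp only: mmult_assoc)
  thus ?thesis unfolding a by simp
qed

lemma msqrt_spec:
  fixes U :: "('n::finite,'n) cmat"
  assumes "adj U ** U = idm" "\<And>j. d j \<ge> 0"
  shows "msqrt (U ** diag d ** adj U) = U ** diag (\<lambda>j. sqrt (d j)) ** adj U"
proof (rule msqrt_eq)
  show "psd (U ** diag (\<lambda>j. sqrt (d j)) ** adj U)" by (rule psd_conj) (simp add: assms)
  have "U ** diag (\<lambda>j. sqrt (d j)) ** adj U ** (U ** diag (\<lambda>j. sqrt (d j)) ** adj U)
      = U ** (diag (\<lambda>j. sqrt (d j)) ** (adj U ** U) ** diag (\<lambda>j. sqrt (d j))) ** adj U"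
    by (simp add: mmult_assoc)
  also have "\<dots> = U ** diag d ** adj U" unfolding assms(1) using assms(2) by (simp add: diag_diag mmult_assoc)
  finally show "U ** diag (\<lambda>j. sqrt (d j)) ** adj U ** (U ** diag (\<lambda>j. sqrt (d j)) ** adj U) = U ** diag d ** adj U" .
qed

lemma msqrt_props:
  fixes M :: "('n::finite,'n) cmat"
  assumes "psd M" shows "psd (msqrt M)" "msqrt M ** msqrt M = M"
proof -
  obtain U :: "('n,'n) cmat" and d where U: "adj U ** U = idm" "U ** adj U = idm"
    "M = U ** diag d ** adj U" "\<forall>j. d j \<ge> 0"
    using psd_spectral[OF assms] by blast
  have e: "msqrt M = U ** diag (\<lambda>j. sqrt (d j)) ** adj U" unfolding U(3) by (rule msqrt_spec) (use U in auto)
  show "psd (msqrt M)" unfolding e by (rule psd_conj) (use U in auto)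
  have "U ** diag (\<lambda>j. sqrt (d j)) ** adj U ** (U ** diag (\<lambda>j. sqrt (d j)) ** adj U)
      = U ** (diag (\<lambda>j. sqrt (d j)) ** (adj U ** U) ** diag (\<lambda>j. sqrt (d j))) ** adj U"
    by (simp add: mmult_assoc)
  also have "\<dots> = M" unfolding U(1) U(3) using U(4) by (simp add: diag_diag mmult_assoc)
  finally show "msqrt M ** msqrt M = M" unfolding e .
qed

lemma mtrace_spec:
  fixes U :: "('n::finite,'n) cmat"
  assumes "adj U ** U = idm"
  shows "mtrace (U ** diag d ** adj U) = complex_of_real (\<Sum>j\<in>UNIV. d j)"
proof -
  have "mtrace (U ** diag d ** adj U) = mtrace (adj U ** (U ** diag d))" by (rule mtrace_comm)
  also have "\<dots> = mtrace (diag d)" by (simp add: assms flip: mmult_assoc)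
  finally show ?thesis by (simp add: mtrace_def diag_def of_real_sum)
qed

lemma sq_aux1: "x > 0 \<Longrightarrow> 1 / sqrt x * x * (1 / sqrt x) = (1::real)"
  by (simp add: divide_simps)

lemma sq_aux2: "x > 0 \<Longrightarrow> 1 / sqrt x * x = sqrt (x::real)"
  by (simp add: divide_simps)

lemma sq_aux3: "x > 0 \<Longrightarrow> x / sqrt x = sqrt (x::real)"
  by (simp add: divide_simps)

lemma tn_swap:
  fixes Y :: "('m::finite,'n::finite) cmat"
  shows "mtrace (msqrt (Y ** adj Y)) = mtrace (msqrt (adj Y ** Y))"
proof -
  obtain V :: "('n,'n) cmat" and d where V: "adj V ** V = idm" "V ** adj V = idm"
    "adj Y ** Y = V ** diag d ** adj V" "\<forall>j. d j \<ge> 0"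
    using psd_spectral[OF psd_gram[of Y]] by blast
  have "msqrt (adj Y ** Y) = V ** diag (\<lambda>j. sqrt (d j)) ** adj V"
    unfolding V(3) by (rule msqrt_spec[OF V(1)]) (use V(4) in auto)
  hence t1: "mtrace (msqrt (adj Y ** Y)) = complex_of_real (\<Sum>j\<in>UNIV. sqrt (d j))"
    by (simp only: mtrace_spec[OF V(1)])
  define g where "g j = (if d j > 0 then 1 / sqrt (d j) else 0)" for j
  define p where "p j = (if d j > 0 then 1 else (0::real))" for j
  define q where "q j = (if d j > 0 then 0 else (1::real))" for j
  have d0: "\<not> d j > 0 \<Longrightarrow> d j = 0" for j using V(4)[rule_format, of j] by linarith
  have gdg_pt: "g j * d j * g j = p j" for j
    by (cases "d j > 0") (simp_all add: g_def p_def sq_aux1)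
  have gd_pt: "g j * d j = sqrt (d j)" for j
    by (cases "d j > 0") (simp_all add: g_def sq_aux2 sq_aux3 d0)
  have qdq_pt: "q j * d j * q j = 0" for j
    by (cases "d j > 0") (simp_all add: q_def d0)
  have pp_pt: "p j * p j = p j" for j by (simp add: p_def)
  have pq_pt: "p j = 1 - q j" for j by (simp add: p_def q_def)
  define B where "B = Y ** V"
  have BB: "adj B ** B = diag d"
  proof -
    have "adj B ** B = adj V ** (adj Y ** Y) ** V" unfolding B_def adj_mmult by (simp add: mmult_assoc)
    also have "\<dots> = diag d" unfolding V(3) by (rule unit_conj[OF V(1)])
    finally show ?thesis .
  qed
  define S where "S = B ** diag g ** adj B"
  have pS: "psd S" unfolding S_def by (rule psd_conj) (simp add: g_def)
  have gdg: "diag g ** diag d ** diag g = diag p"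
  proof -
    have "(\<lambda>i. g i * d i * g i) = p" by (rule ext) (rule gdg_pt)
    thus ?thesis unfolding diag_diag by simp
  qed
  have SS: "S ** S = B ** diag p ** adj B"
  proof -
    have "S ** S = B ** (diag g ** (adj B ** B) ** diag g) ** adj B" unfolding S_def by (simp add: mmult_assoc)
    thus ?thesis unfolding BB gdg by (simp add: mmult_assoc)
  qed
  define Z where "Z = B ** diag q"
  have "adj Z ** Z = diag q ** (adj B ** B) ** diag q" unfolding Z_def adj_mmult by (simp add: mmult_assoc)
  also have "\<dots> = diag (\<lambda>_. 0)"
  proof -
    have "(\<lambda>i. q i * d i * q i) = (\<lambda>_. 0)" by (rule ext) (rule qdq_pt)
    thus ?thesis unfolding BB diag_diag by simp
  qed
  finally have "mtrace (adj Z ** Z) = 0" by (simp add: mtrace_def diag_def)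
  hence Z0: "Z = (\<lambda>_ _. 0)" by (rule frob_zero)
  have Bp: "B ** diag p = B"
  proof (rule ext, rule ext)
    fix i j
    have "Z i j = 0" using Z0 by simp
    hence "B i j * complex_of_real (q j) = 0" unfolding Z_def mmult_diag .
    thus "(B ** diag p) i j = B i j" unfolding mmult_diag pq_pt by (simp add: algebra_simps)
  qed
  have pp: "diag p ** diag p = diag p"
  proof -
    have "(\<lambda>i. p i * p i) = p" by (rule ext) (rule pp_pt)
    thus ?thesis unfolding diag_diag by simp
  qed
  have "B ** diag p ** adj B = B ** adj B" unfolding Bp ..
  also have "\<dots> = Y ** (V ** adj V) ** adj Y" unfolding B_def adj_mmult by (simp only: mmult_assoc)
  also have "\<dots> = Y ** adj Y" unfolding V(2) by simp
  finally have calc: "B ** diag p ** adj B = Y ** adj Y" .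
  have "S ** S = Y ** adj Y" using SS calc by simp
  hence "msqrt (Y ** adj Y) = S" using msqrt_eq[OF pS] by simp
  moreover have "mtrace S = complex_of_real (\<Sum>j\<in>UNIV. sqrt (d j))"
  proof -
    have "mtrace S = mtrace ((B ** diag g) ** adj B)" unfolding S_def ..
    also have "\<dots> = mtrace (adj B ** (B ** diag g))" by (rule mtrace_comm)
    also have "\<dots> = mtrace ((adj B ** B) ** diag g)" by (simp only: mmult_assoc)
    also have "\<dots> = mtrace (diag g ** (adj B ** B))" by (rule mtrace_comm)
    also have "\<dots> = (\<Sum>j\<in>UNIV. complex_of_real (g j * d j))" unfolding BB diag_diag
      by (simp add: mtrace_def diag_def)
    also have "\<dots> = complex_of_real (\<Sum>j\<in>UNIV. sqrt (d j))" unfolding gd_pt of_real_sum ..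
    finally show ?thesis .
  qed
  ultimately show ?thesis using t1 by simp
qed


definition mconj :: "('i,'j) cmat \<Rightarrow> ('i,'j) cmat" where "mconj A = (\<lambda>i j. cnj (A i j))"

lemma mconj_mmult: "mconj (A ** B) = mconj A ** mconj B"
  unfolding mconj_def mmult_def by (auto intro!: ext)

lemma adj_mconj: "adj (mconj A) = mconj (adj A)"
  unfolding mconj_def adj_def by auto

lemma mtrace_mconj: "mtrace (mconj A) = cnj (mtrace A)"
  unfolding mconj_def mtrace_def by simp

lemma cinner_mconj: "cinner v (mvec (mconj M) v) = cnj (cinner (\<lambda>i. cnj (v i)) (mvec M (\<lambda>i. cnj (v i))))"
  unfolding cinner_def mvec_def mconj_def by simp

lemma psd_mconj: "psd M \<Longrightarrow> psd (mconj M)"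
  unfolding psd_iff cinner_mconj by simp

lemma msqrt_mconj:
  assumes "psd M" shows "msqrt (mconj M) = mconj (msqrt M)"
proof (rule msqrt_eq)
  show "psd (mconj (msqrt M))" by (rule psd_mconj[OF msqrt_props(1)[OF assms]])
  show "mconj (msqrt M) ** mconj (msqrt M) = mconj M"
    unfolding mconj_mmult[symmetric] msqrt_props(2)[OF assms] ..
qed

lemma cinner_KK: "cinner (mvec K x) (mvec K y) = cinner x (mvec (adj K ** K) y)"
proof -
  have "cinner x (mvec (adj K ** K) y) = cinner x (mvec (adj K) (mvec K y))" by (simp only: mvec_mmult)
  also have "\<dots> = cinner (mvec (adj (adj K)) x) (mvec K y)" by (rule cinner_adj)
  finally show ?thesis by simp
qed

lemma svd_exists:
  fixes K :: "('n::finite,'n) cmat"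
  shows "\<exists>U S V. is_svd K U S V"
proof -
  obtain V :: "('n,'n) cmat" and d where V: "adj V ** V = idm" "V ** adj V = idm"
    "adj K ** K = V ** diag d ** adj V" "\<forall>j. d j \<ge> 0"
    using psd_spectral[OF psd_gram[of K]] by blast
  define v where "v j = (\<lambda>i. V i j)" for j
  define w where "w j = mvec K (v j)" for j
  define s where "s j = sqrt (d j)" for j
  define J where "J = {j. d j > 0}"
  define u0 where "u0 j = (\<lambda>i. complex_of_real (1 / s j) * w j i)" for j
  have ww: "cinner (w i) (w j) = (if i = j then complex_of_real (d j) else 0)" for i j
  proof -
    have "cinner (w i) (w j) = cinner (v i) (mvec (adj K ** K) (v j))" unfolding w_def by (rule cinner_KK)
    also have "mvec (adj K ** K) (v j) = (\<lambda>k. complex_of_real (d j) * v j k)"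
      unfolding v_def by (rule col_eig[OF V(3,1)])
    also have "cinner (v i) \<dots> = complex_of_real (d j) * cinner (v i) (v j)" by (rule cinner_scale_right)
    finally show ?thesis unfolding v_def col_norm[OF V(1)] by simp
  qed
  have "orthon J u0"
    unfolding orthon_def
  proof (intro ballI)
    fix i j assume i: "i \<in> J" and j: "j \<in> J"
    have "cinner (u0 i) (u0 j) = complex_of_real (1 / s i) * complex_of_real (1 / s j) * cinner (w i) (w j)"
      unfolding u0_def cinner_scale_left cinner_scale_right by simp
    also have "\<dots> = (if i = j then 1 else 0)"
    proof (cases "i = j")
      case True
      have dj: "d j > 0" using j unfolding J_def by simp
      have "complex_of_real (1 / s i) * complex_of_real (1 / s j) * cinner (w i) (w j)
          = complex_of_real (1 / sqrt (d j) * d j * (1 / sqrt (d j)))"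
        unfolding ww True s_def by (simp only: simp_thms(6) if_True of_real_mult mult_ac)
      also have "\<dots> = 1" unfolding sq_aux1[OF dj] by simp
      finally show ?thesis using True by simp
    next
      case False thus ?thesis unfolding ww by simp
    qed
    finally show "cinner (u0 i) (u0 j) = (if i = j then 1 else 0)" .
  qed
  moreover have "eigfam (\<lambda>_ _. 0) J u0" unfolding eigfam_def by (auto simp: mvec_def intro!: exI[of _ 0])
  moreover have "adj (\<lambda>_ _. 0) = (\<lambda>_ _. (0::complex))" unfolding adj_def by simp
  ultimately obtain u where u: "\<forall>j\<in>J. u j = u0 j" "orthon UNIV u"
    using family_extend[of "\<lambda>_ _. 0" J u0] by blast
  define U where "U = cols u"
  have U1: "adj U ** U = idm" unfolding U_def by (rule orthon_cols[OF u(2)])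
  have U2: "U ** adj U = idm" by (rule square_unitary[OF U1])
  have KV: "K ** V = U ** diag s"
  proof (rule ext, rule ext)
    fix i j
    have "(K ** V) i j = w j i" unfolding w_def v_def mmult_def mvec_def by simp
    also have "\<dots> = (U ** diag s) i j"
    proof (cases "j \<in> J")
      case True
      hence "s j > 0" unfolding J_def s_def by simp
      thus ?thesis unfolding mmult_diag U_def cols_def using True u(1) unfolding u0_def by simp
    next
      case False
      hence "\<not> d j > 0" unfolding J_def by simp
      hence dj: "d j = 0" using V(4)[rule_format, of j] by linarith
      hence "cinner (w j) (w j) = 0" using ww by simp
      hence "w j = (\<lambda>_. 0)" by (simp only: cinner_self of_real_eq_0_iff vnorm2_eq_0)
      thus ?thesis unfolding mmult_diag using dj by (simp add: s_def)
    qed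
    finally show "(K ** V) i j = (U ** diag s) i j" .
  qed
  have "K = K ** (V ** adj V)" using V(2) by simp
  also have "\<dots> = U ** diag s ** adj V" by (simp only: KV flip: mmult_assoc)
  finally have "K = U ** diag s ** adj V" .
  moreover have "(\<forall>i j. i \<noteq> j \<longrightarrow> diag s i j = 0) \<and> (\<forall>i. Im (diag s i i) = 0 \<and> Re (diag s i i) \<ge> 0)"
    unfolding diag_def s_def using V(4) by simp
  ultimately have "is_svd K U (diag s) V" unfolding is_svd_def unitary_def using U1 U2 V(1,2) by auto
  thus ?thesis by blast
qed


definition pmat :: "('a \<times> 'b \<Rightarrow> complex) \<Rightarrow> ('a,'b) cmat" where "pmat \<psi> = (\<lambda>a b. \<psi> (a,b))"

lemma rho_eq: "ptrace_B (ketbra \<psi> \<psi>) = pmat \<psi> ** adj (pmat (\<psi> :: 'a \<times> 'b::finite \<Rightarrow> complex))"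
  unfolding ptrace_B_def ketbra_def mmult_def adj_def pmat_def by simp

lemma K_eq: "ptrace_A (ketbra \<phi> \<psi>) = mconj (adj (pmat \<phi>) ** pmat (\<psi> :: 'a::finite \<times> 'b \<Rightarrow> complex))"
  unfolding ptrace_A_def ketbra_def mmult_def adj_def pmat_def mconj_def by simp

lemma mconj_mconj[simp]: "mconj (mconj A) = A" unfolding mconj_def by simp

lemma fid_formula:
  fixes \<psi> \<phi> :: "'a::finite \<times> 'b::finite \<Rightarrow> complex"
  shows "fidelity (ptrace_B (ketbra \<psi> \<psi>)) (ptrace_B (ketbra \<phi> \<phi>))
     = (Re (mtrace (msqrt (adj (ptrace_A (ketbra \<phi> \<psi>)) ** ptrace_A (ketbra \<phi> \<psi>)))))\<^sup>2"
proof -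
  define \<Psi> where "\<Psi> = pmat \<psi>"
  define \<Phi> where "\<Phi> = pmat \<phi>"
  define K where "K = ptrace_A (ketbra \<phi> \<psi>)"
  define \<rho> where "\<rho> = \<Psi> ** adj \<Psi>"
  define \<sigma> where "\<sigma> = \<Phi> ** adj \<Phi>"
  have p\<rho>: "psd \<rho>" unfolding \<rho>_def by (rule psd_gram')
  have p\<sigma>: "psd \<sigma>" unfolding \<sigma>_def by (rule psd_gram')
  define R where "R = msqrt \<rho>"
  define T where "T = msqrt \<sigma>"
  have hR: "adj R = R" unfolding R_def by (rule psd_herm[OF msqrt_props(1)[OF p\<rho>]])
  have hT: "adj T = T" unfolding T_def by (rule psd_herm[OF msqrt_props(1)[OF p\<sigma>]])
  have RR: "R ** R = \<rho>" unfolding R_def by (rule msqrt_props(2)[OF p\<rho>])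
  have TT: "T ** T = \<sigma>" unfolding T_def by (rule msqrt_props(2)[OF p\<sigma>])
  define X where "X = R ** T"
  define Y where "Y = T ** \<Psi>"
  have XX: "adj X ** X = Y ** adj Y"
  proof -
    have "adj X ** X = T ** (R ** R) ** T" unfolding X_def adj_mmult hR hT by (simp only: mmult_assoc)
    also have "\<dots> = Y ** adj Y" unfolding RR \<rho>_def Y_def adj_mmult hT by (simp only: mmult_assoc)
    finally show ?thesis .
  qed
  define N where "N = adj \<Phi> ** \<Psi>"
  have YY: "adj Y ** Y = adj N ** N"
  proof -
    have "adj Y ** Y = adj \<Psi> ** (T ** T) ** \<Psi>" unfolding Y_def adj_mmult hT by (simp only: mmult_assoc)
    also have "\<dots> = adj N ** N" unfolding TT \<sigma>_def N_def adj_mmult adj_adj by (simp only: mmult_assoc)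
    finally show ?thesis .
  qed
  have NK: "N = mconj K" unfolding N_def K_def K_eq \<Phi>_def \<Psi>_def by simp
  have NN: "adj N ** N = mconj (adj K ** K)" unfolding NK adj_mconj mconj_mmult ..
  have "trace_norm X = Re (mtrace (msqrt (adj K ** K)))"
  proof -
    have "trace_norm X = Re (mtrace (msqrt (Y ** adj Y)))" unfolding trace_norm_def XX ..
    also have "\<dots> = Re (mtrace (msqrt (adj Y ** Y)))" unfolding tn_swap ..
    also have "\<dots> = Re (mtrace (mconj (msqrt (adj K ** K))))"
      unfolding YY NN msqrt_mconj[OF psd_gram] ..
    also have "\<dots> = Re (mtrace (msqrt (adj K ** K)))" unfolding mtrace_mconj by simp
    finally show ?thesis .
  qed
  moreover have "ptrace_B (ketbra \<psi> \<psi>) = \<rho>" unfolding \<rho>_def \<Psi>_def by (rule rho_eq)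
  moreover have "ptrace_B (ketbra \<phi> \<phi>) = \<sigma>" unfolding \<sigma>_def \<Phi>_def by (rule rho_eq)
  ultimately show ?thesis unfolding fidelity_def K_def[symmetric] X_def R_def T_def by simp
qed

lemma svd_diag: "is_svd K U S V \<Longrightarrow> S = diag (\<lambda>i. Re (S i i))"
  unfolding is_svd_def diag_def by (auto intro!: ext simp: complex_eq_iff)

lemma svd_KK:
  fixes U V :: "('n::finite,'n) cmat"
  assumes "adj U ** U = idm" "adj V ** V = idm" "K = U ** diag s ** adj V" "\<And>i. s i \<ge> 0"
  shows "Re (mtrace (msqrt (adj K ** K))) = (\<Sum>i\<in>UNIV. s i)"
proof -
  have "adj K ** K = V ** (diag s ** (adj U ** U) ** diag s) ** adj V"
    unfolding assms(3) adj_mmult adj_adj adj_diag by (simp only: mmult_assoc)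
  also have "\<dots> = V ** diag (\<lambda>i. s i * s i) ** adj V" unfolding assms(1) by (simp add: diag_diag mmult_assoc)
  finally have "msqrt (adj K ** K) = V ** diag (\<lambda>i. sqrt (s i * s i)) ** adj V"
    using msqrt_spec[OF assms(2), of "\<lambda>i. s i * s i"] by simp
  also have "(\<lambda>i. sqrt (s i * s i)) = s" using assms(4) by (auto intro!: ext)
  finally have m: "msqrt (adj K ** K) = V ** diag s ** adj V" .
  show ?thesis unfolding m mtrace_spec[OF assms(2)] by simp
qed

lemma sum_pairs: "(\<Sum>x\<in>(UNIV::('a::finite \<times> 'b::finite) set). f x) = (\<Sum>a\<in>UNIV. \<Sum>b\<in>UNIV. f (a, b))"
  by (simp add: sum.cartesian_product flip: UNIV_Times_UNIV)

lemma mvec_id_tensor: "mvec (id_tensor R) \<psi> (a, b) = (\<Sum>b'\<in>UNIV. R b b' * \<psi> (a, b'))"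
proof -
  have "mvec (id_tensor R) \<psi> (a, b) = (\<Sum>a'\<in>UNIV. \<Sum>b'\<in>UNIV. (if a = a' then R b b' else 0) * \<psi> (a', b'))"
    unfolding mvec_def sum_pairs id_tensor_def by simp
  also have "\<dots> = (\<Sum>a'\<in>UNIV. if a = a' then (\<Sum>b'\<in>UNIV. R b b' * \<psi> (a', b')) else 0)"
    by (rule sum.cong) auto
  finally show ?thesis by simp
qed

lemma sandwich_cinner: "sandwich x M y = cinner x (mvec M y)"
  unfolding sandwich_def cinner_def mvec_def by (simp add: sum_distrib_left mult.assoc)

lemma sandwich_eq:
  fixes \<psi> \<phi> :: "'a::finite \<times> 'b::finite \<Rightarrow> complex"
  shows "sandwich \<phi> (id_tensor R) \<psi> = mtrace (R ** adj (ptrace_A (ketbra \<phi> \<psi>)))"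
proof -
  have "sandwich \<phi> (id_tensor R) \<psi> = cinner \<phi> (mvec (id_tensor R) \<psi>)"
    by (rule sandwich_cinner)
  also have "\<dots> = (\<Sum>a\<in>UNIV. \<Sum>b\<in>UNIV. \<Sum>b'\<in>UNIV. cnj (\<phi> (a,b)) * (R b b' * \<psi> (a, b')))"
    unfolding cinner_def sum_pairs mvec_id_tensor by (simp add: sum_distrib_left)
  also have "\<dots> = (\<Sum>b\<in>UNIV. \<Sum>b'\<in>UNIV. \<Sum>a\<in>UNIV. cnj (\<phi> (a,b)) * (R b b' * \<psi> (a, b')))"
    by (subst sum.swap) (simp add: sum.swap[of _ _ "UNIV::'a set"])
  also have "\<dots> = mtrace (R ** adj (ptrace_A (ketbra \<phi> \<psi>)))"
    unfolding mtrace_def mmult_def adj_def ptrace_A_def ketbra_def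
    by (simp add: sum_distrib_left mult_ac)
  finally show ?thesis .
qed


lemma mtrace_mmult_diag: "mtrace (A ** diag d) = (\<Sum>i\<in>UNIV. A i i * complex_of_real (d i))"
  unfolding mtrace_def mmult_diag ..

lemma isometry_norm: "adj M ** M = idm \<Longrightarrow> vnorm2 (mvec M x) = vnorm2 x"
proof -
  assume a: "adj M ** M = idm"
  have "complex_of_real (vnorm2 (mvec M x)) = cinner x (mvec (adj M ** M) x)"
    unfolding cinner_self[symmetric] by (rule cinner_KK)
  also have "\<dots> = complex_of_real (vnorm2 x)" unfolding a cinner_self[symmetric]
    by (simp add: mvec_def idm_def if_distrib[where f="\<lambda>z. z * _"] cong: if_cong)
  finally show ?thesis by (simp only: of_real_eq_iff)
qed

lemma cinner_bound: "cmod (cinner x y) \<le> (vnorm2 x + vnorm2 y) / 2"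
proof -
  have "cmod (cinner x y) \<le> (\<Sum>i\<in>UNIV. cmod (cnj (x i) * y i))" unfolding cinner_def by (rule norm_sum)
  also have "\<dots> \<le> (\<Sum>i\<in>UNIV. ((cmod (x i))\<^sup>2 + (cmod (y i))\<^sup>2) / 2)"
  proof (rule sum_mono)
    fix i
    have "0 \<le> (cmod (x i) - cmod (y i))\<^sup>2" by simp
    thus "cmod (cnj (x i) * y i) \<le> ((cmod (x i))\<^sup>2 + (cmod (y i))\<^sup>2) / 2"
      by (simp add: norm_mult power2_eq_square algebra_simps)
  qed
  also have "\<dots> = (vnorm2 x + vnorm2 y) / 2" unfolding vnorm2_def
    by (simp only: sum.distrib flip: sum_divide_distrib)
  finally show ?thesis .
qed

lemma vnorm2_pairs: "vnorm2 (\<psi> :: 'a::finite \<times> 'b::finite \<Rightarrow> complex) = (\<Sum>a\<in>UNIV. vnorm2 (\<lambda>b. \<psi> (a, b)))"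
  unfolding vnorm2_def sum_pairs ..

lemma id_tensor_norm:
  assumes "adj Z ** Z = idm"
  shows "vnorm2 (mvec (id_tensor Z) (\<psi> :: 'a::finite \<times> 'b::finite \<Rightarrow> complex)) = vnorm2 \<psi>"
proof -
  have "mvec (id_tensor Z) \<psi> = (\<lambda>(a,b). mvec Z (\<lambda>b'. \<psi> (a, b')) b)"
  proof (rule ext)
    fix x :: "'a \<times> 'b"
    obtain a b where x: "x = (a, b)" by (cases x)
    show "mvec (id_tensor Z) \<psi> x = (\<lambda>(a,b). mvec Z (\<lambda>b'. \<psi> (a, b')) b) x"
      unfolding x mvec_id_tensor by (simp add: mvec_def)
  qed
  hence "vnorm2 (mvec (id_tensor Z) \<psi>) = (\<Sum>a\<in>UNIV. vnorm2 (mvec Z (\<lambda>b'. \<psi> (a, b'))))"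
    unfolding vnorm2_pairs by simp
  also have "\<dots> = vnorm2 \<psi>" unfolding isometry_norm[OF assms] vnorm2_pairs[of \<psi>] ..
  finally show ?thesis .
qed

lemma col_bound:
  fixes U :: "('n::finite,'n) cmat"
  assumes "U ** adj U = idm"
  shows "(cmod (cinner (\<lambda>k. U k i) y))\<^sup>2 \<le> vnorm2 y"
proof -
  have "adj (adj U) ** adj U = idm" using assms by simp
  hence "vnorm2 y = vnorm2 (mvec (adj U) y)" by (simp add: isometry_norm)
  also have "\<dots> = (\<Sum>k\<in>UNIV. (cmod (mvec (adj U) y k))\<^sup>2)" unfolding vnorm2_def ..
  also have "\<dots> \<ge> (cmod (mvec (adj U) y i))\<^sup>2"
    by (rule member_le_sum) auto
  also have "mvec (adj U) y i = cinner (\<lambda>k. U k i) y" unfolding mvec_def adj_def cinner_def ..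
  finally show ?thesis .
qed

lemma proj_split:
  assumes "adj P = P" "P ** P = P"
  shows "vnorm2 v = vnorm2 (mvec P v) + vnorm2 (\<lambda>i. v i - mvec P v i)"
proof -
  define p where "p = mvec P v"
  define r where "r = (\<lambda>i. v i - p i)"
  have pp: "cinner p p = cinner v p"
  proof -
    have "cinner p p = cinner v (mvec (adj P ** P) v)" unfolding p_def by (rule cinner_KK)
    thus ?thesis unfolding assms p_def .
  qed
  have pv: "cinner p v = cinner v p"
    unfolding p_def using cinner_adj[of v P v] assms(1) by simp
  have pr: "cinner p r = 0" unfolding r_def cinner_diff_right pp pv by simp
  have rp: "cinner r p = 0" using pr cinner_commute[of r p] by simp
  have "v = (\<lambda>i. p i + 1 * r i)" unfolding r_def by simp
  hence "cinner v v = cinner p p + 1 * cinner p r + cnj 1 * cinner r p + cnj 1 * 1 * cinner r r"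
    using cinner_expand[of p 1 r p 1 r] by simp
  hence "complex_of_real (vnorm2 v) = complex_of_real (vnorm2 p + vnorm2 r)"
    unfolding pr rp cinner_self by simp
  thus ?thesis unfolding p_def[symmetric] r_def[symmetric] by (simp only: of_real_eq_iff)
qed

lemma sandwich_svd:
  assumes "K = U ** diag s ** adj V"
  shows "mtrace (R ** adj K) = (\<Sum>i\<in>UNIV. (adj U ** R ** V) i i * complex_of_real (s i))"
proof -
  have "mtrace (R ** adj K) = mtrace (R ** V ** (diag s ** adj U))"
    unfolding assms adj_mmult adj_adj adj_diag by (simp only: mmult_assoc)
  also have "\<dots> = mtrace (diag s ** adj U ** (R ** V))" by (rule mtrace_comm)
  also have "\<dots> = mtrace ((adj U ** R ** V) ** diag s)"
    by (subst mtrace_comm) (simp only: mmult_assoc)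
  finally show ?thesis unfolding mtrace_mmult_diag .
qed

lemma diag_entry_cinner: "(adj U ** R ** V) i i = cinner (\<lambda>k. U k i) (mvec R (\<lambda>k. V k i))"
  unfolding mmult_assoc adj_mmult_cinner by (simp add: mmult_def mvec_def)

theorem mainTheorem1:
  fixes \<psi> \<phi> :: "'a::finite \<times> 'b::finite \<Rightarrow> complex" and \<eta> :: real
  assumes "pure_state \<psi>" and "pure_state \<phi>" and "\<eta> \<ge> 0"
  defines "\<rho> \<equiv> ptrace_B (ketbra \<psi> \<psi>)"
      and "\<sigma> \<equiv> ptrace_B (ketbra \<phi> \<phi>)"
      and "W \<equiv> sgn_eta \<eta> (ptrace_A (ketbra \<phi> \<psi>))"
  shows "partial_isometry W
    \<and> (cmod (sandwich \<phi> (id_tensor W) \<psi>))\<^sup>2 \<ge> fidelity \<rho> \<sigma> - 2 * \<eta> * real (card (UNIV :: 'b set))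
    \<and> (\<forall>R :: ('b, 'b) cmat. partial_isometry R \<and> fidelity \<rho> \<sigma> = (cmod (sandwich \<phi> (id_tensor R) \<psi>))\<^sup>2
           \<longrightarrow> psd_le (adj W ** W) (adj R ** R))"
proof -
  define K where "K = ptrace_A (ketbra \<phi> \<psi>)"
  have WK: "W = sgn_eta \<eta> K" unfolding W_def K_def ..
  obtain U0 S0 V0 where "is_svd K U0 S0 V0" using svd_exists by blast
  hence ex: "\<exists>W. \<exists>U S V. is_svd K U S V \<and> W = U ** (\<lambda>i j. if i = j \<and> Re (S i i) > \<eta> then 1 else 0) ** adj V"
    by blast
  obtain U S V where svd: "is_svd K U S V"
    and Wuv: "W = U ** (\<lambda>i j. if i = j \<and> Re (S i i) > \<eta> then 1 else 0) ** adj V"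
    using someI_ex[OF ex] unfolding WK sgn_eta_def by blast
  define s where "s i = Re (S i i)" for i
  have Sd: "S = diag s" using svd_diag[OF svd] unfolding s_def .
  have snn: "s i \<ge> 0" for i using svd unfolding is_svd_def s_def by auto
  have U1: "adj U ** U = idm" and U2: "U ** adj U = idm" and V1: "adj V ** V = idm" and V2: "V ** adj V = idm"
    using svd unfolding is_svd_def unitary_def by auto
  have KU: "K = U ** diag s ** adj V" using svd Sd unfolding is_svd_def by simp
  define pe where "pe i = (if s i > \<eta> then 1 else (0::real))" for i
  have Pdiag: "(\<lambda>i j. if i = j \<and> Re (S i i) > \<eta> then 1 else 0) = diag pe"
    unfolding diag_def pe_def s_def by (auto intro!: ext)
  have Wd: "W = U ** diag pe ** adj V" using Wuv Pdiag by simp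
  have pepe: "diag pe ** diag pe = diag pe"
  proof -
    have "(\<lambda>i. pe i * pe i) = pe" by (auto intro!: ext simp: pe_def)
    thus ?thesis unfolding diag_diag by simp
  qed
  define a where "a = (\<Sum>i\<in>UNIV. s i)"
  have Fa: "fidelity \<rho> \<sigma> = a\<^sup>2"
    unfolding \<rho>_def \<sigma>_def fid_formula K_def[symmetric] a_def using svd_KK[OF U1 V1 KU snn] by simp
  have sand: "sandwich \<phi> (id_tensor R) \<psi> = (\<Sum>i\<in>UNIV. (adj U ** R ** V) i i * complex_of_real (s i))" for R
    unfolding sandwich_eq K_def[symmetric] by (rule sandwich_svd[OF KU])
  define Z where "Z = U ** adj V"
  have Z1: "adj Z ** Z = idm"
  proof -
    have "adj Z ** Z = V ** (adj U ** U) ** adj V" unfolding Z_def adj_mmult adj_adj by (simp only: mmult_assoc)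
    thus ?thesis using V2 unfolding U1 by simp
  qed
  have part1: "partial_isometry W"
    unfolding partial_isometry_def
  proof (intro exI conjI)
    show "isometry Z" unfolding isometry_def by (rule Z1)
    show "projector (V ** diag pe ** adj V)" unfolding projector_def
    proof
      show "adj (V ** diag pe ** adj V) = V ** diag pe ** adj V"
        unfolding adj_mmult adj_adj adj_diag by (simp only: mmult_assoc)
      have "V ** diag pe ** adj V ** (V ** diag pe ** adj V) = V ** (diag pe ** (adj V ** V) ** diag pe) ** adj V"
        by (simp only: mmult_assoc)
      thus "V ** diag pe ** adj V ** (V ** diag pe ** adj V) = V ** diag pe ** adj V"
        using pepe unfolding V1 by simp
    qed
    have "Z ** (V ** diag pe ** adj V) = U ** (adj V ** V) ** diag pe ** adj V"
      unfolding Z_def by (simp only: mmult_assoc)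
    thus "W = Z ** (V ** diag pe ** adj V)" unfolding V1 Wd by simp
  qed
  define b where "b = (\<Sum>i\<in>UNIV. pe i * s i)"
  have UWV: "adj U ** W ** V = diag pe"
  proof -
    have "adj U ** W ** V = (adj U ** U) ** diag pe ** (adj V ** V)" unfolding Wd by (simp only: mmult_assoc)
    thus ?thesis unfolding U1 V1 by simp
  qed
  have sW: "sandwich \<phi> (id_tensor W) \<psi> = complex_of_real b"
    unfolding sand UWV b_def of_real_sum by (simp add: diag_def)
  have UZV: "adj U ** Z ** V = idm"
  proof -
    have "adj U ** Z ** V = (adj U ** U) ** (adj V ** V)" unfolding Z_def by (simp only: mmult_assoc)
    thus ?thesis unfolding U1 V1 by simp
  qed
  have sZ: "sandwich \<phi> (id_tensor Z) \<psi> = complex_of_real a"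
    unfolding sand UZV a_def of_real_sum by (simp add: idm_def)
  have n\<psi>: "vnorm2 \<psi> = 1" using assms(1) unfolding pure_state_def vnorm2_def .
  have n\<phi>: "vnorm2 \<phi> = 1" using assms(2) unfolding pure_state_def vnorm2_def .
  have a0: "a \<ge> 0" unfolding a_def by (rule sum_nonneg) (simp add: snn)
  have a1: "a \<le> 1"
  proof -
    have "cmod (sandwich \<phi> (id_tensor Z) \<psi>) \<le> (vnorm2 \<phi> + vnorm2 (mvec (id_tensor Z) \<psi>)) / 2"
      unfolding sandwich_cinner by (rule cinner_bound)
    also have "\<dots> = 1" unfolding id_tensor_norm[OF Z1] n\<psi> n\<phi> by simp
    finally show ?thesis unfolding sZ using a0 by simp
  qed
  have b0: "b \<ge> 0" unfolding b_def by (rule sum_nonneg) (simp add: snn pe_def)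
  have ba: "b \<le> a" unfolding a_def b_def by (rule sum_mono) (simp add: snn pe_def)
  have abd: "a - b \<le> \<eta> * real (card (UNIV :: 'b set))"
  proof -
    have "a - b = (\<Sum>i\<in>UNIV. s i - pe i * s i)" unfolding a_def b_def by (simp add: sum_subtractf)
    also have "\<dots> \<le> (\<Sum>i\<in>(UNIV::'b set). \<eta>)" by (rule sum_mono) (simp add: pe_def assms(3))
    finally show ?thesis by (simp add: mult.commute)
  qed
  have part2: "(cmod (sandwich \<phi> (id_tensor W) \<psi>))\<^sup>2 \<ge> fidelity \<rho> \<sigma> - 2 * \<eta> * real (card (UNIV :: 'b set))"
  proof -
    have cm: "(cmod (sandwich \<phi> (id_tensor W) \<psi>))\<^sup>2 = b\<^sup>2" unfolding sW using b0 by simp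
    define e where "e = \<eta> * real (card (UNIV :: 'b set))"
    have e0: "e \<ge> 0" unfolding e_def using assms(3) by simp
    have "a\<^sup>2 - b\<^sup>2 = (a - b) * (a + b)" by (simp add: power2_eq_square algebra_simps)
    also have "\<dots> \<le> e * (a + b)" by (rule mult_right_mono) (use abd a0 b0 e_def in auto)
    also have "\<dots> \<le> e * 2" by (rule mult_left_mono) (use a1 ba e0 in auto)
    finally have "a\<^sup>2 - b\<^sup>2 \<le> 2 * e" by simp
    thus ?thesis unfolding cm Fa e_def by simp
  qed
  have part3: "psd_le (adj W ** W) (adj R ** R)"
    if R: "partial_isometry R" "fidelity \<rho> \<sigma> = (cmod (sandwich \<phi> (id_tensor R) \<psi>))\<^sup>2" for R :: "('b,'b) cmat"
  proof -
    obtain Ut :: "('b,'b) cmat" and Pr where Ut: "isometry Ut" and Pr: "projector Pr" and RUP: "R = Ut ** Pr"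
      using R(1) unfolding partial_isometry_def by blast
    have hP: "adj Pr = Pr" and PP: "Pr ** Pr = Pr" using Pr unfolding projector_def by auto
    have Ut1: "adj Ut ** Ut = idm" using Ut unfolding isometry_def .
    have RR: "adj R ** R = Pr"
    proof -
      have "adj R ** R = adj Pr ** (adj Ut ** Ut) ** Pr" unfolding RUP adj_mmult by (simp only: mmult_assoc)
      thus ?thesis using PP unfolding Ut1 hP by simp
    qed
    define v where "v i = (\<lambda>k. V k i)" for i
    define u where "u i = (\<lambda>k. U k i)" for i
    define c where "c i = (adj U ** R ** V) i i" for i
    have cc: "c i = cinner (u i) (mvec R (v i))" for i unfolding c_def u_def v_def by (rule diag_entry_cinner)
    have vv: "vnorm2 (v i) = 1" for i
    proof -
      have "cinner (v i) (v i) = 1" unfolding v_def using col_norm[OF V1, of i i] by simp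
      thus ?thesis unfolding cinner_self by simp
    qed
    have Pv_le: "vnorm2 (mvec Pr x) \<le> vnorm2 x" for x
      using proj_split[OF hP PP, of x] vnorm2_nonneg[of "\<lambda>i. x i - mvec Pr x i"] by linarith
    have Rv: "vnorm2 (mvec R x) = vnorm2 (mvec Pr x)" for x
      unfolding RUP mvec_mmult isometry_norm[OF Ut1] ..
    have c2: "(cmod (c i))\<^sup>2 \<le> vnorm2 (mvec Pr (v i))" for i
      unfolding cc u_def Rv[symmetric] by (rule col_bound[OF U2])
    have c1: "cmod (c i) \<le> 1" for i
    proof -
      have "(cmod (c i))\<^sup>2 \<le> 1" using c2[of i] Pv_le[of "v i"] vv[of i] by simp
      thus ?thesis using power2_le_imp_le[of "cmod (c i)" 1] by simp
    qed
    have sR: "sandwich \<phi> (id_tensor R) \<psi> = (\<Sum>i\<in>UNIV. c i * complex_of_real (s i))"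
      unfolding sand c_def ..
    have "(cmod (sandwich \<phi> (id_tensor R) \<psi>))\<^sup>2 = a\<^sup>2" using R(2) Fa by simp
    hence ca: "cmod (sandwich \<phi> (id_tensor R) \<psi>) = a" using a0 by (simp add: power2_eq_iff_nonneg)
    have "a \<le> (\<Sum>i\<in>UNIV. cmod (c i) * s i)"
    proof -
      have "a = cmod (\<Sum>i\<in>UNIV. c i * complex_of_real (s i))" using ca sR by simp
      also have "\<dots> \<le> (\<Sum>i\<in>UNIV. cmod (c i * complex_of_real (s i)))" by (rule norm_sum)
      also have "\<dots> = (\<Sum>i\<in>UNIV. cmod (c i) * s i)" by (simp add: norm_mult snn)
      finally show ?thesis .
    qed
    hence "(\<Sum>i\<in>UNIV. s i - cmod (c i) * s i) \<le> 0" unfolding a_def by (simp add: sum_subtractf)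
    moreover have nn: "\<forall>i\<in>UNIV. 0 \<le> s i - cmod (c i) * s i"
      using c1 snn by (simp add: mult_left_le_one_le)
    ultimately have sum0: "(\<Sum>i\<in>UNIV. s i - cmod (c i) * s i) = 0" by (simp add: sum_nonneg antisym)
    have zz: "\<forall>i\<in>UNIV. s i - cmod (c i) * s i = 0"
      using sum_nonneg_eq_0_iff[of UNIV "\<lambda>i. s i - cmod (c i) * s i"] nn sum0 by simp
    have z: "s i - cmod (c i) * s i = 0" for i using zz by blast
    have fix_v: "mvec Pr (v i) = v i" if si: "s i > \<eta>" for i
    proof -
      have "s i > 0" using si assms(3) by simp
      hence "cmod (c i) = 1" using z[of i] by simp
      hence "1 \<le> vnorm2 (mvec Pr (v i))" using c2[of i] by simp
      hence "vnorm2 (mvec Pr (v i)) = 1" using Pv_le[of "v i"] vv[of i] by simp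
      hence "vnorm2 (\<lambda>k. v i k - mvec Pr (v i) k) = 0" using proj_split[OF hP PP, of "v i"] vv[of i] by simp
      hence d0: "(\<lambda>k. v i k - mvec Pr (v i) k) = (\<lambda>_. 0)" by (simp only: vnorm2_eq_0)
      show ?thesis
      proof (rule ext)
        fix k have "v i k - mvec Pr (v i) k = 0" using fun_cong[OF d0, of k] by simp
        thus "mvec Pr (v i) k = v i k" by simp
      qed
    qed
    have WW: "adj W ** W = V ** diag pe ** adj V"
    proof -
      have "adj W ** W = V ** (diag pe ** (adj U ** U) ** diag pe) ** adj V"
        unfolding Wd adj_mmult adj_adj adj_diag by (simp only: mmult_assoc)
      thus ?thesis using pepe unfolding U1 by simp
    qed
    show ?thesis unfolding psd_le_def psd_iff RR WW
    proof
      fix w :: "'b \<Rightarrow> complex"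
      define y where "y = mvec (adj V) w"
      define y' where "y' = mvec (adj V) (mvec Pr w)"
      have q1: "cinner w (mvec Pr w) = complex_of_real (vnorm2 (mvec Pr w))"
      proof -
        have "cinner (mvec Pr w) (mvec Pr w) = cinner w (mvec (adj Pr ** Pr) w)" by (rule cinner_KK)
        thus ?thesis unfolding hP PP cinner_self by simp
      qed
      have q2: "cinner w (mvec (V ** diag pe ** adj V) w) = complex_of_real (\<Sum>k\<in>UNIV. pe k * (cmod (y k))\<^sup>2)"
      proof -
        have "cinner w (mvec (V ** diag pe ** adj V) w) = cinner (mvec (adj V) w) (mvec (diag pe) (mvec (adj V) w))"
          unfolding mvec_mmult cinner_adj ..
        thus ?thesis unfolding y_def cinner_diag .
      qed
      have yy: "pe k * (cmod (y k))\<^sup>2 = pe k * (cmod (y' k))\<^sup>2" for k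
      proof (cases "s k > \<eta>")
        case True
        have "y k = cinner (v k) w" unfolding y_def v_def mvec_def adj_def cinner_def ..
        also have "\<dots> = cinner (mvec Pr (v k)) w" unfolding fix_v[OF True] ..
        also have "\<dots> = cinner (v k) (mvec Pr w)" using herm_cinner[OF hP] by simp
        also have "\<dots> = y' k" unfolding y'_def v_def mvec_def adj_def cinner_def ..
        finally show ?thesis by simp
      next
        case False thus ?thesis by (simp add: pe_def)
      qed
      have "(\<Sum>k\<in>UNIV. pe k * (cmod (y k))\<^sup>2) \<le> (\<Sum>k\<in>UNIV. (cmod (y' k))\<^sup>2)"
        unfolding yy by (rule sum_mono) (simp add: pe_def)
      also have "\<dots> = vnorm2 (mvec Pr w)" unfolding y'_def vnorm2_def[symmetric]
        by (rule isometry_norm) (simp add: V2)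
      finally have le: "(\<Sum>k\<in>UNIV. pe k * (cmod (y k))\<^sup>2) \<le> vnorm2 (mvec Pr w)" .
      have "cinner w (mvec (\<lambda>i j. Pr i j - (V ** diag pe ** adj V) i j) w)
          = complex_of_real (vnorm2 (mvec Pr w) - (\<Sum>k\<in>UNIV. pe k * (cmod (y k))\<^sup>2))"
        unfolding mvec_diff cinner_diff_right q1 q2 by simp
      thus "Im (cinner w (mvec (\<lambda>i j. Pr i j - (V ** diag pe ** adj V) i j) w)) = 0 \<and>
            0 \<le> Re (cinner w (mvec (\<lambda>i j. Pr i j - (V ** diag pe ** adj V) i j) w))"
        using le by simp
    qed
  qed
  show ?thesis using part1 part2 part3 by blast
qed

end
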